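(* Let $g\le h$ and let $A$ be a tuple of $h$ self-adjoint complex matrices such that $\mathcal D_A\subseteq SM(\mathbb C)^h$ is bounded and $\mathcal D_A(2)$ is closed under entrywise complex conjugation. Then every Euclidean extreme point of the convex set $\mathcal P_g\mathcal D_A(1)\subseteq\mathbb R^g$ is a free extreme point of the matrix convex set $\mathcal P_g\mathcal D_A$.
   Context: For $A\in SM_d(\mathbb C)^h$, $\mathcal D_A=\bigcup_n\mathcal D_A(n)$, $\mathcal D_A(n)=\{X\in SM_n(\mathbb C)^h: I-\sum_iA_i\otimes X_i\succeq0\}$. For a set $K$ of $h$-tuples and $g\le h$, $\mathcal P_gK$ consists of all $X\in SM_n^g$ with $(X,Y)\in K$ for some $Y\in SM_n^{h-g}$; $\mathcal P_g\mathcal D_A(1)$ is its first level. A point $X\in K(n)$ is a free extreme point of a matrix convex set $K$ if whenever $X=\sum_iV_i^*X^{(i)}V_i$ with $X^{(i)}\in K$, $V_i\neq0$, $\sum_iV_i^*V_i=I$, each $X^{(i)}$ is unitarily equivalent to $X$ or to $X\oplus Z$ for some $Z\in K$. *)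

theory Defs
  imports Complex_Main "Jordan_Normal_Form.Schur_Decomposition"
begin

text \<open>A graded set of tuples
  (such as a matrix convex set or a free spectrahedron) is a function
  K :: nat => complex mat list set, where K n is its level n (tuples of
  n x n matrices).\<close>

definition hermitian_mat :: "nat \<Rightarrow> complex mat \<Rightarrow> bool" where
  "hermitian_mat n X \<longleftrightarrow> X \<in> carrier_mat n n \<and> mat_adjoint X = X"

definition SM_tuples :: "nat \<Rightarrow> nat \<Rightarrow> complex mat list set" where
  "SM_tuples h n = {X. length X = h \<and> (\<forall>i<h. hermitian_mat n (X ! i))}"

definition psd_mat :: "nat \<Rightarrow> complex mat \<Rightarrow> bool" where
  "psd_mat n M \<longleftrightarrow> hermitian_mat n M \<and>
     (\<forall>v \<in> carrier_vec n. 0 \<le> Re (conjugate v \<bullet> (M *\<^sub>v v)))"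

definition mat_sum :: "nat \<Rightarrow> nat \<Rightarrow> nat \<Rightarrow> (nat \<Rightarrow> complex mat) \<Rightarrow> complex mat" where
  "mat_sum r c k f = mat r c (\<lambda>ij. \<Sum>i<k. f i $$ ij)"

definition kron :: "complex mat \<Rightarrow> complex mat \<Rightarrow> complex mat" where
  "kron A B = mat (dim_row A * dim_row B) (dim_col A * dim_col B)
     (\<lambda>(i,j). A $$ (i div dim_row B, j div dim_col B) * B $$ (i mod dim_row B, j mod dim_col B))"

definition spectrahedron :: "nat \<Rightarrow> complex mat list \<Rightarrow> nat \<Rightarrow> complex mat list set" where
  "spectrahedron d A n = {X \<in> SM_tuples (length A) n.
     psd_mat (d * n) (1\<^sub>m (d * n) - mat_sum (d * n) (d * n) (length A) (\<lambda>i. kron (A ! i) (X ! i)))}"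

definition vec_norm2 :: "complex vec \<Rightarrow> real" where
  "vec_norm2 v = (\<Sum>i<dim_vec v. (cmod (v $ i))\<^sup>2)"

definition op_norm_le :: "complex mat \<Rightarrow> real \<Rightarrow> bool" where
  "op_norm_le X C \<longleftrightarrow> (\<forall>v \<in> carrier_vec (dim_col X). vec_norm2 (X *\<^sub>v v) \<le> C\<^sup>2 * vec_norm2 v)"

definition bounded_graded :: "(nat \<Rightarrow> complex mat list set) \<Rightarrow> bool" where
  "bounded_graded K \<longleftrightarrow> (\<exists>C. \<forall>n X. X \<in> K n \<longrightarrow> (\<forall>i<length X. op_norm_le (X ! i) C))"

definition proj_graded :: "nat \<Rightarrow> (nat \<Rightarrow> complex mat list set) \<Rightarrow> nat \<Rightarrow> complex mat list set" where
  "proj_graded g K n = take g ` K n"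

definition tuple_scale :: "real \<Rightarrow> complex mat list \<Rightarrow> complex mat list" where
  "tuple_scale t X = map (\<lambda>M. complex_of_real t \<cdot>\<^sub>m M) X"

definition tuple_add :: "complex mat list \<Rightarrow> complex mat list \<Rightarrow> complex mat list" where
  "tuple_add X Y = map2 (+) X Y"

text \<open>Euclidean extreme point of a set S of tuples of 1 x 1 self-adjoint
  matrices (identified with points of R^g): x is in S and is not in the
  open segment between two distinct points of S.\<close>
definition euclidean_extreme_point :: "complex mat list \<Rightarrow> complex mat list set \<Rightarrow> bool" where
  "euclidean_extreme_point x S \<longleftrightarrow> x \<in> S \<and>
     (\<forall>y\<in>S. \<forall>z\<in>S. \<forall>t::real. 0 < t \<and> t < 1 \<and> y \<noteq> z \<longrightarrow>
        x \<noteq> tuple_add (tuple_scale t y) (tuple_scale (1 - t) z))"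

definition tuple_compress :: "complex mat \<Rightarrow> complex mat list \<Rightarrow> complex mat list" where
  "tuple_compress V X = map (\<lambda>M. mat_adjoint V * M * V) X"

definition tuple_dsum :: "nat \<Rightarrow> nat \<Rightarrow> complex mat list \<Rightarrow> complex mat list \<Rightarrow> complex mat list" where
  "tuple_dsum n m X Z = map2 (\<lambda>A B. four_block_mat A (0\<^sub>m n m) (0\<^sub>m m n) B) X Z"

definition unitary_mat :: "nat \<Rightarrow> complex mat \<Rightarrow> bool" where
  "unitary_mat n U \<longleftrightarrow> U \<in> carrier_mat n n \<and> mat_adjoint U * U = 1\<^sub>m n \<and> U * mat_adjoint U = 1\<^sub>m n"

definition unitarily_equiv :: "nat \<Rightarrow> complex mat list \<Rightarrow> complex mat list \<Rightarrow> bool" where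
  "unitarily_equiv n Y W \<longleftrightarrow> (\<exists>U. unitary_mat n U \<and> Y = tuple_compress U W)"

definition free_extreme_point :: "(nat \<Rightarrow> complex mat list set) \<Rightarrow> nat \<Rightarrow> complex mat list \<Rightarrow> bool" where
  "free_extreme_point K n X \<longleftrightarrow> X \<in> K n \<and>
     (\<forall>(k::nat) (m::nat \<Rightarrow> nat) (V::nat \<Rightarrow> complex mat) (Y::nat \<Rightarrow> complex mat list).
        (\<forall>i<k. V i \<in> carrier_mat (m i) n \<and> V i \<noteq> 0\<^sub>m (m i) n \<and> Y i \<in> K (m i)) \<and>
        mat_sum n n k (\<lambda>i. mat_adjoint (V i) * V i) = 1\<^sub>m n \<and>
        (\<forall>j<length X. X ! j = mat_sum n n k (\<lambda>i. mat_adjoint (V i) * (Y i ! j) * V i))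
        \<longrightarrow> (\<forall>i<k. unitarily_equiv (m i) (Y i) X \<or>
                   (\<exists>p Z. Z \<in> K p \<and> m i = n + p \<and> unitarily_equiv (m i) (Y i) (tuple_dsum n p X Z))))"

end

theory Submission
  imports Defs
begin


definition trunc :: "nat \<Rightarrow> (nat \<Rightarrow> complex) \<Rightarrow> nat \<Rightarrow> complex" where
  "trunc n a = (\<lambda>k. if k < n then a k else 0)"

definition sesq_form :: "nat \<Rightarrow> ((nat\<Rightarrow>complex) \<Rightarrow> (nat\<Rightarrow>complex) \<Rightarrow> complex) \<Rightarrow> bool" where
  "sesq_form n F \<longleftrightarrow> (\<forall>a a' g. F (\<lambda>k. a k + a' k) g = F a g + F a' g) \<and>
     (\<forall>c a g. F (\<lambda>k. c * a k) g = cnj c * F a g) \<and>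
     (\<forall>a g. F g a = cnj (F a g)) \<and>
     (\<forall>a g. F a g = F (trunc n a) (trunc n g))"

definition psd_form :: "((nat\<Rightarrow>complex) \<Rightarrow> (nat\<Rightarrow>complex) \<Rightarrow> complex) \<Rightarrow> bool" where
  "psd_form F \<longleftrightarrow> (\<forall>a. 0 \<le> Re (F a a))"

lemma sf_add1: "sesq_form n F \<Longrightarrow> F (\<lambda>k. a k + a' k) g = F a g + F a' g"
  unfolding sesq_form_def by blast
lemma sf_smul1: "sesq_form n F \<Longrightarrow> F (\<lambda>k. c * a k) g = cnj c * F a g"
  unfolding sesq_form_def by blast
lemma sf_herm: "sesq_form n F \<Longrightarrow> F g a = cnj (F a g)"
  unfolding sesq_form_def by blast
lemma sf_trunc: "sesq_form n F \<Longrightarrow> F a g = F (trunc n a) (trunc n g)"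
  unfolding sesq_form_def by blast
lemma sf_add2: assumes F: "sesq_form n F" shows "F g (\<lambda>k. a k + a' k) = F g a + F g a'"
proof -
  have "F g (\<lambda>k. a k + a' k) = cnj (F (\<lambda>k. a k + a' k) g)" by (rule sf_herm[OF F])
  also have "\<dots> = cnj (F a g) + cnj (F a' g)" by (simp only: sf_add1[OF F] complex_cnj_add)
  also have "cnj (F a g) = F g a" by (rule sf_herm[OF F, symmetric])
  also have "cnj (F a' g) = F g a'" by (rule sf_herm[OF F, symmetric])
  finally show ?thesis .
qed
lemma sf_smul2: assumes F: "sesq_form n F" shows "F g (\<lambda>k. c * a k) = c * F g a"
proof -
  have "F g (\<lambda>k. c * a k) = cnj (F (\<lambda>k. c * a k) g)" by (rule sf_herm[OF F])
  also have "\<dots> = c * cnj (F a g)" by (simp only: sf_smul1[OF F] complex_cnj_mult complex_cnj_cnj)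
  also have "cnj (F a g) = F g a" by (rule sf_herm[OF F, symmetric])
  finally show ?thesis .
qed
lemma sf_real: assumes F: "sesq_form n F" shows "F a a = complex_of_real (Re (F a a))"
proof -
  have "cnj (F a a) = F a a" by (rule sf_herm[OF F, symmetric])
  then have "Im (F a a) = 0" by (metis complex_cnj_cancel_iff Reals_cnj_iff complex_is_Real_iff)
  then show ?thesis by (simp add: complex_eq_iff)
qed

lemma sf_expand:
  assumes "sesq_form n F"
  shows "F (\<lambda>k. x k + c * e k) (\<lambda>k. x k + c * e k) =
     F x x + cnj c * F e x + c * F x e + cnj c * c * F e e"
  using assms by (simp add: sf_add1[OF assms] sf_add2[OF assms] sf_smul1[OF assms] sf_smul2[OF assms] algebra_simps)

lemma discr:
  fixes A P Q :: real
  assumes "\<And>s. 0 \<le> A - 2 * s * P + s^2 * Q" "0 \<le> Q" "0 \<le> P"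
  shows "P^2 \<le> A * Q"
proof (cases "Q = 0")
  case True
  show ?thesis
  proof (cases "P = 0")
    case False
    with assms have "0 \<le> A - 2 * ((\<bar>A\<bar>+1)/(2*P)) * P" using assms(1)[of "(\<bar>A\<bar>+1)/(2*P)"] True by simp
    also have "2 * ((\<bar>A\<bar>+1)/(2*P)) * P = \<bar>A\<bar>+1" using False by simp
    finally show ?thesis by simp
  qed (use True in simp)
next
  case False
  then have Q: "Q > 0" using assms by simp
  have "0 \<le> A - 2 * (P/Q) * P + (P/Q)^2 * Q" using assms(1) .
  also have "A - 2 * (P/Q) * P + (P/Q)^2 * Q = (A * Q - P^2) / Q" using Q
    by (simp add: field_simps power2_eq_square)
  finally show ?thesis using Q by (simp add: zero_le_divide_iff)
qed

lemma cs_gen: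
  fixes p :: complex and A Q :: real
  assumes "\<And>s::real. 0 \<le> A - 2 * s * (cmod p)^2 + s^2 * ((cmod p)^2 * Q)" "0 \<le> Q"
  shows "(cmod p)^2 \<le> A * Q"
proof (cases "p = 0")
  case True
  have "0 \<le> A" using assms(1)[of 0] by simp
  then show ?thesis using True assms(2) by simp
next
  case False
  have "((cmod p)^2)^2 \<le> A * ((cmod p)^2 * Q)"
    by (rule discr) (use assms in auto)
  then have "(cmod p)^2 * (cmod p)^2 \<le> (cmod p)^2 * (A * Q)"
    by (metis power2_eq_square mult.assoc mult.commute mult.left_commute)
  moreover have "(cmod p)^2 > 0" using False by simp
  ultimately show ?thesis by (meson mult_le_cancel_left_pos)
qed

lemma sf_cs:
  assumes F: "sesq_form n F" and P: "psd_form F"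
  shows "(cmod (F x y))^2 \<le> Re (F x x) * Re (F y y)"
proof -
  let ?p = "F x y"
  define r where "r = (cmod ?p)^2"
  have pr: "?p * cnj ?p = of_real r" unfolding r_def by (rule complex_norm_square[symmetric])
  have "0 \<le> Re (F x x) - 2 * s * r + s^2 * (r * Re (F y y))" for s :: real
  proof -
    let ?c = "- (complex_of_real s * cnj ?p)"
    have "0 \<le> Re (F (\<lambda>k. x k + ?c * y k) (\<lambda>k. x k + ?c * y k))" using P unfolding psd_form_def by blast
    also have "F (\<lambda>k. x k + ?c * y k) (\<lambda>k. x k + ?c * y k) = F x x + cnj ?c * F y x + ?c * F x y + cnj ?c * ?c * F y y"
      by (rule sf_expand[OF F])
    also have "F y x = cnj ?p" by (rule sf_herm[OF F])
    finally have "0 \<le> Re (F x x + cnj ?c * cnj ?p + ?c * ?p + cnj ?c * ?c * F y y)" .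
    also have "cnj ?c * cnj ?p = - (s * (?p * cnj ?p))" by simp
    also have "?c * ?p = - (s * (?p * cnj ?p))" by simp
    also have "cnj ?c * ?c = s^2 * (?p * cnj ?p)" by (simp add: power2_eq_square algebra_simps)
    finally have "0 \<le> Re (F x x + - (complex_of_real s * complex_of_real r) + - (complex_of_real s * complex_of_real r) + complex_of_real (s^2) * complex_of_real r * F y y)"
      unfolding pr .
    then show ?thesis
      by (simp add: algebra_simps)
  qed
  then have "0 \<le> Re (F x x) - 2 * s * (cmod ?p)^2 + s^2 * ((cmod ?p)^2 * Re (F y y))" for s
    unfolding r_def .
  moreover have "0 \<le> Re (F y y)" using P unfolding psd_form_def by blast
  ultimately show ?thesis by (rule cs_gen)
qed

lemma trunc_trunc[simp]: "trunc n (trunc n a) = trunc n a"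
  unfolding trunc_def by auto

lemma sesq_form_comp:
  assumes F: "sesq_form m F"
    and Eadd: "\<And>a a'. E (\<lambda>k. a k + a' k) = (\<lambda>k. E a k + E a' k)"
    and Esm: "\<And>c a. E (\<lambda>k. c * a k) = (\<lambda>k. c * E a k)"
    and Etr: "\<And>a. E (trunc n a) = E a"
  shows "sesq_form n (\<lambda>a g. F (E a) (E g))"
  unfolding sesq_form_def
proof (intro conjI allI)
  fix a g show "F (E g) (E a) = cnj (F (E a) (E g))" by (rule sf_herm[OF F])
qed (simp_all add: Eadd Esm Etr sf_add1[OF F] sf_smul1[OF F])

lemma psd_form_comp: "psd_form F \<Longrightarrow> psd_form (\<lambda>a g. F (E a) (E g))"
  unfolding psd_form_def by blast

lemma sf_zero: assumes F: "sesq_form n F" shows "F (\<lambda>k. 0) g = 0"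
proof -
  have "F (\<lambda>k. 0 * g k) g = cnj 0 * F g g" by (rule sf_smul1[OF F])
  then show ?thesis by simp
qed

lemma amgm2: fixes l q X :: real assumes "l > 0" shows "2 * q * X \<le> l * q^2 + X^2 / l"
proof -
  have "0 \<le> (l * q - X)^2" by simp
  then have "2 * l * q * X \<le> l * (l * q^2) + X^2" by (simp add: power2_eq_square algebra_simps)
  then have "(2 * q * X) * l \<le> (l * q^2 + X^2 / l) * l" using assms by (simp add: algebra_simps power2_eq_square)
  then show ?thesis using assms by (meson mult_le_cancel_right_pos)
qed

lemma norm4: "cmod (u+v+w+z) \<le> cmod u + cmod v + cmod w + cmod z"
  using norm_triangle_ineq[of "u+v+w" z] norm_triangle_ineq[of "u+v" w] norm_triangle_ineq[of u v] by linarith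

lemma key_bound:
  "sesq_form n L \<Longrightarrow> sesq_form n B \<Longrightarrow> sesq_form n C \<Longrightarrow> psd_form L \<Longrightarrow> psd_form C \<Longrightarrow>
   (\<forall>a g. (cmod (B a g))^2 \<le> Re (L a a) * Re (C g g)) \<Longrightarrow>
   \<exists>K\<ge>0. \<forall>a. cmod (B a a) \<le> K * Re (L a a)"
proof (induction n arbitrary: L B C)
  case 0
  have "B a a = 0" for a
  proof -
    have "B a a = B (trunc 0 a) (trunc 0 a)" by (rule sf_trunc[OF 0(2)])
    also have "trunc 0 a = (\<lambda>k. 0)" unfolding trunc_def by simp
    finally show ?thesis using sf_zero[OF 0(2)] by simp
  qed
  then show ?case by (intro exI[of _ 0]) simp
next
  case (Suc n)
  note L = Suc.prems(1) and B = Suc.prems(2) and C = Suc.prems(3) and PL = Suc.prems(4)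
    and PC = Suc.prems(5) and H = Suc.prems(6)
  define e where "e = (\<lambda>k::nat. if k = n then (1::complex) else 0)"
  define l where "l = Re (L e e)"
  define E where "E a = (\<lambda>k. trunc n a k + (- (L e (trunc n a) / of_real l)) * e k)" for a
  have trunc_add: "trunc n (\<lambda>k. a k + a' k) = (\<lambda>k. trunc n a k + trunc n a' k)" for a a'
    unfolding trunc_def by auto
  have trunc_sm: "trunc n (\<lambda>k. c * a k) = (\<lambda>k. c * trunc n a k)" for c a
    unfolding trunc_def by auto
  have Eadd: "E (\<lambda>k. a k + a' k) = (\<lambda>k. E a k + E a' k)" for a a'
    unfolding E_def trunc_add sf_add2[OF L] by (auto simp: algebra_simps add_divide_distrib)
  have Esm: "E (\<lambda>k. c * a k) = (\<lambda>k. c * E a k)" for c a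
    unfolding E_def trunc_sm sf_smul2[OF L] by (auto simp: algebra_simps)
  have Etr: "E (trunc n a) = E a" for a unfolding E_def by simp
  let ?L = "\<lambda>a g. L (E a) (E g)" and ?B = "\<lambda>a g. B (E a) (E g)" and ?C = "\<lambda>a g. C (E a) (E g)"
  have sL: "sesq_form n ?L" by (rule sesq_form_comp[OF L Eadd Esm Etr])
  have sB: "sesq_form n ?B" by (rule sesq_form_comp[OF B Eadd Esm Etr])
  have sC: "sesq_form n ?C" by (rule sesq_form_comp[OF C Eadd Esm Etr])
  have H': "\<forall>a g. (cmod (?B a g))^2 \<le> Re (?L a a) * Re (?C g g)" using H by blast
  have "\<exists>K\<ge>0. \<forall>a. cmod (?B a a) \<le> K * Re (?L a a)"
    by (rule Suc.IH[OF sL sB sC psd_form_comp[OF PL] psd_form_comp[OF PC] H'])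
  then obtain K' where K'0: "K' \<ge> 0" and K': "\<And>a. cmod (B (E a) (E a)) \<le> K' * Re (L (E a) (E a))" by blast
  have l0: "l \<ge> 0" using PL unfolding l_def psd_form_def by blast
  have Lee: "L e e = of_real l" unfolding l_def by (rule sf_real[OF L])
  define c0 where "c0 = Re (C e e)"
  have c00: "c0 \<ge> 0" using PC unfolding c0_def psd_form_def by blast
  have LeE: "L e (E a) = 0" for a
  proof (cases "l = 0")
    case True
    have "(cmod (L e y))^2 \<le> 0" for y using sf_cs[OF L PL, of e y] True unfolding l_def by simp
    then show ?thesis by simp
  next
    case False
    have "L e (E a) = L e (trunc n a) + (- (L e (trunc n a) / of_real l)) * L e e"
      unfolding E_def sf_add2[OF L] sf_smul2[OF L] ..
    then show ?thesis using False Lee by simp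
  qed
  define K where "K = K' + 2 + 2 * (c0 / l)"
  have K0: "K \<ge> 0" unfolding K_def using K'0 c00 l0 by simp
  show ?case
  proof (intro exI[of _ K] conjI allI K0)
    fix a
    define av where "av = a n + L e (trunc n a) / of_real l"
    have decomp: "trunc (Suc n) a = (\<lambda>k. E a k + av * e k)"
      unfolding E_def av_def e_def trunc_def by (rule ext) (auto simp: algebra_simps less_Suc_eq)
    have exp: "F a a = F (E a) (E a) + cnj av * F e (E a) + av * F (E a) e + cnj av * av * F e e"
      if "sesq_form (Suc n) F" for F
    proof -
      have "F a a = F (trunc (Suc n) a) (trunc (Suc n) a)" by (rule sf_trunc[OF that])
      also have "\<dots> = F (E a) (E a) + cnj av * F e (E a) + av * F (E a) e + cnj av * av * F e e"
        unfolding decomp by (rule sf_expand[OF that])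
      finally show ?thesis .
    qed
    define q where "q = cmod av"
    have q0: "q \<ge> 0" unfolding q_def by simp
    have atat: "cnj av * av = of_real (q^2)" unfolding q_def using complex_norm_square[of av] by (simp add: mult.commute)
    define P where "P = Re (L (E a) (E a))"
    have P0: "P \<ge> 0" using PL unfolding P_def psd_form_def by blast
    have LEe: "L (E a) e = 0" using sf_herm[OF L, of "E a" e] LeE by simp
    have Laa: "Re (L a a) = P + l * q^2"
      unfolding exp[OF L] LeE LEe atat Lee P_def by simp
    define x where "x = B (E a) e"
    have Bex: "B e (E a) = cnj x" unfolding x_def by (rule sf_herm[OF B])
    have Baa: "B a a = B (E a) (E a) + cnj av * cnj x + av * x + cnj av * av * B e e"
      unfolding exp[OF B] Bex x_def ..
    have tri: "cmod (B a a) \<le> cmod (B (E a) (E a)) + 2 * q * cmod x + q^2 * cmod (B e e)"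
    proof -
      have "cmod (B a a) \<le> cmod (B (E a) (E a)) + cmod (cnj av * cnj x) + cmod (av * x) + cmod (cnj av * av * B e e)"
        unfolding Baa by (rule norm4)
      also have "cmod (cnj av * cnj x) = q * cmod x" unfolding q_def by (simp add: norm_mult)
      also have "cmod (av * x) = q * cmod x" unfolding q_def by (simp add: norm_mult)
      also have "cmod (cnj av * av * B e e) = q^2 * cmod (B e e)" unfolding q_def by (simp add: norm_mult power2_eq_square)
      finally show ?thesis by simp
    qed
    have Z: "cmod (B (E a) (E a)) \<le> K' * P" unfolding P_def by (rule K')
    show "cmod (B a a) \<le> K * Re (L a a)"
    proof (cases "l = 0")
      case True
      have "(cmod (B e y))^2 \<le> 0" for y using H[rule_format, of e y] True unfolding l_def by simp
      then have Bey: "B e y = 0" for y by simp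
      have "x = 0" using Bex Bey[of "E a"] by simp
      then have "cmod (B a a) \<le> K' * P" using tri Z Bey[of e] by simp
      also have "\<dots> \<le> K * (P + l * q^2)" unfolding K_def using True P0 by (simp add: algebra_simps)
      finally show ?thesis unfolding Laa .
    next
      case False
      then have lp: "l > 0" using l0 by simp
      define r where "r = c0 / l"
      define M where "M = l * q^2"
      have r0: "r \<ge> 0" unfolding r_def using c00 l0 by simp
      have M0: "M \<ge> 0" unfolding M_def using l0 by simp
      have X2: "(cmod x)^2 \<le> P * c0" unfolding x_def P_def c0_def using H by blast
      have Y2: "(cmod (B e e))^2 \<le> l * c0" unfolding l_def c0_def using H by blast
      have h1: "2 * q * cmod x \<le> M + r * P"
      proof -
        have "2 * q * cmod x \<le> l * q^2 + (cmod x)^2 / l" by (rule amgm2[OF lp])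
        also have "(cmod x)^2 / l \<le> P * c0 / l" using X2 lp by (simp add: divide_right_mono)
        finally show ?thesis unfolding M_def r_def by (simp add: mult.commute)
      qed
      have h2: "2 * cmod (B e e) \<le> l + c0"
      proof -
        have "2 * 1 * cmod (B e e) \<le> l * 1^2 + (cmod (B e e))^2 / l" by (rule amgm2[OF lp])
        also have "(cmod (B e e))^2 / l \<le> l * c0 / l" using Y2 lp by (intro divide_right_mono) auto
        finally show ?thesis using lp by simp
      qed
      have h3: "q^2 * cmod (B e e) \<le> M / 2 + r * M / 2"
      proof -
        have "q^2 * (2 * cmod (B e e)) \<le> q^2 * (l + c0)" using h2 by (simp add: mult_left_mono)
        also have "q^2 * (l + c0) = M + r * M" unfolding M_def r_def using lp by (simp add: field_simps)
        finally show ?thesis by simp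
      qed
      have p1: "K' * M \<ge> 0" "r * P \<ge> 0" "r * M \<ge> 0" using K'0 M0 r0 P0 by auto
      have "cmod (B a a) \<le> K' * P + (M + r * P) + (M / 2 + r * M / 2)" using tri Z h1 h3 by linarith
      also have "\<dots> \<le> (K' + 2 + 2 * r) * (P + M)" using p1 P0 M0 by (simp add: algebra_simps)
      finally show ?thesis unfolding Laa K_def r_def M_def .
    qed
  qed
qed


lemma star_cs:
  assumes L: "sesq_form n L" and B: "sesq_form n B" and C: "sesq_form n C"
    and H: "\<And>a g. 0 \<le> Re (L a a) + Re (C g g) - 2 * Re (B a g)"
  shows "(cmod (B a g))^2 \<le> Re (L a a) * Re (C g g)"
proof -
  let ?p = "B a g"
  define r where "r = (cmod ?p)^2"
  have pr: "cnj ?p * ?p = of_real r" unfolding r_def using complex_norm_square[of ?p] by (simp add: mult.commute)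
  have "0 \<le> Re (L a a) - 2 * s * r + s^2 * (r * Re (C g g))" for s :: real
  proof -
    let ?c = "complex_of_real s * cnj ?p"
    have "0 \<le> Re (L a a) + Re (C (\<lambda>k. ?c * g k) (\<lambda>k. ?c * g k)) - 2 * Re (B a (\<lambda>k. ?c * g k))" by (rule H)
    also have "C (\<lambda>k. ?c * g k) (\<lambda>k. ?c * g k) = cnj ?c * ?c * C g g"
      by (simp add: sf_smul1[OF C] sf_smul2[OF C])
    also have "B a (\<lambda>k. ?c * g k) = ?c * ?p" by (simp add: sf_smul2[OF B])
    also have "cnj ?c * ?c = s^2 * (cnj ?p * ?p)" by (simp add: power2_eq_square algebra_simps)
    also have "?c * ?p = s * (cnj ?p * ?p)" by (simp add: algebra_simps)
    finally have "0 \<le> Re (L a a) + Re (complex_of_real (s^2) * complex_of_real r * C g g) - 2 * Re (complex_of_real s * complex_of_real r)"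
      unfolding pr .
    then show ?thesis by (simp add: algebra_simps)
  qed
  then have "0 \<le> Re (L a a) - 2 * s * (cmod ?p)^2 + s^2 * ((cmod ?p)^2 * Re (C g g))" for s
    unfolding r_def .
  moreover have "0 \<le> Re (C g g)" using H[of "\<lambda>k. 0" g] sf_zero[OF L] sf_zero[OF B] by simp
  ultimately show ?thesis by (rule cs_gen)
qed

lemma key_final:
  assumes L: "sesq_form n L" and B: "sesq_form n B" and C: "sesq_form n C"
    and H: "\<And>a g. 0 \<le> Re (L a a) + Re (C g g) - 2 * Re (B a g)"
  shows "\<exists>t>0. \<forall>a. 0 \<le> Re (L a a) - t * Re (B a a) \<and> 0 \<le> Re (L a a) + t * Re (B a a)"
proof -
  have PL: "psd_form L" unfolding psd_form_def
  proof
    fix a show "0 \<le> Re (L a a)" using H[of a "\<lambda>k. 0"] sf_zero[OF C] sf_herm[OF B, of "\<lambda>k. 0" a] sf_zero[OF B] by simp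
  qed
  have PC: "psd_form C" unfolding psd_form_def
  proof
    fix g show "0 \<le> Re (C g g)" using H[of "\<lambda>k. 0" g] sf_zero[OF L] sf_zero[OF B] by simp
  qed
  obtain K where K0: "K \<ge> 0" and K: "\<And>a. cmod (B a a) \<le> K * Re (L a a)"
    using key_bound[OF L B C PL PC] star_cs[OF L B C H] by blast
  define t where "t = 1 / (K + 1)"
  have t0: "t > 0" unfolding t_def using K0 by simp
  show ?thesis
  proof (intro exI[of _ t] conjI t0 allI)
    fix a
    have "\<bar>Re (B a a)\<bar> \<le> K * Re (L a a)" using K[of a] abs_Re_le_cmod order_trans by blast
    then have "t * \<bar>Re (B a a)\<bar> \<le> t * (K * Re (L a a))" using t0 by (simp add: mult_left_mono)
    also have "t * (K * Re (L a a)) \<le> Re (L a a)"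
    proof -
      have "t * K \<le> 1" unfolding t_def using K0 by (simp add: field_simps)
      moreover have "0 \<le> Re (L a a)" using PL unfolding psd_form_def by blast
      ultimately have "(t * K) * Re (L a a) \<le> 1 * Re (L a a)" by (rule mult_right_mono)
      then show ?thesis by (simp add: mult.assoc)
    qed
    finally have "t * \<bar>Re (B a a)\<bar> \<le> Re (L a a)" .
    moreover have "t * \<bar>Re (B a a)\<bar> = \<bar>t * Re (B a a)\<bar>" using t0 by (simp add: abs_mult)
    ultimately have "\<bar>t * Re (B a a)\<bar> \<le> Re (L a a)" by simp
    then show "0 \<le> Re (L a a) - t * Re (B a a)" "0 \<le> Re (L a a) + t * Re (B a a)"
      by (simp_all add: abs_le_iff)
  qed
qed


lemma adj_dim[simp]: "dim_row (mat_adjoint A) = dim_col A" "dim_col (mat_adjoint A) = dim_row A"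
  unfolding mat_adjoint_def by auto
lemma adj_index[simp]: "i < dim_col A \<Longrightarrow> j < dim_row A \<Longrightarrow> mat_adjoint A $$ (i,j) = cnj (A $$ (j,i))"
  unfolding mat_adjoint_def by (auto simp: mat_of_rows_def)
lemma adj_carrier[simp]: "V \<in> carrier_mat m n \<Longrightarrow> mat_adjoint V \<in> carrier_mat n m"
  by auto

definition sesq :: "nat \<Rightarrow> complex mat \<Rightarrow> (nat \<Rightarrow> complex) \<Rightarrow> (nat \<Rightarrow> complex) \<Rightarrow> complex" where
  "sesq n M a g = (\<Sum>k<n. \<Sum>l<n. cnj (a k) * M $$ (k,l) * g l)"

definition vmul :: "complex mat \<Rightarrow> nat \<Rightarrow> (nat \<Rightarrow> complex) \<Rightarrow> nat \<Rightarrow> complex" where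
  "vmul V n a = (\<lambda>k. \<Sum>p<n. V $$ (k,p) * a p)"

lemma swap3: "(\<Sum>x\<in>A. \<Sum>y\<in>B. \<Sum>z\<in>C. f x y z) = (\<Sum>y\<in>B. \<Sum>z\<in>C. \<Sum>x\<in>A. (f x y z :: 'a::comm_monoid_add))"
proof -
  have "(\<Sum>x\<in>A. \<Sum>y\<in>B. \<Sum>z\<in>C. f x y z) = (\<Sum>y\<in>B. \<Sum>x\<in>A. \<Sum>z\<in>C. f x y z)" by (rule sum.swap)
  also have "\<dots> = (\<Sum>y\<in>B. \<Sum>z\<in>C. \<Sum>x\<in>A. f x y z)" by (intro sum.cong refl) (rule sum.swap)
  finally show ?thesis .
qed

lemma swap4: "(\<Sum>p\<in>A. \<Sum>q\<in>B. \<Sum>k\<in>C. \<Sum>l\<in>D. f p q k l) = (\<Sum>k\<in>C. \<Sum>l\<in>D. \<Sum>q\<in>B. \<Sum>p\<in>A. (f p q k l :: 'a::comm_monoid_add))"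
proof -
  have "(\<Sum>p\<in>A. \<Sum>q\<in>B. \<Sum>k\<in>C. \<Sum>l\<in>D. f p q k l) = (\<Sum>p\<in>A. \<Sum>k\<in>C. \<Sum>l\<in>D. \<Sum>q\<in>B. f p q k l)"
    by (intro sum.cong refl) (rule swap3)
  also have "\<dots> = (\<Sum>k\<in>C. \<Sum>l\<in>D. \<Sum>p\<in>A. \<Sum>q\<in>B. f p q k l)" by (rule swap3)
  also have "\<dots> = (\<Sum>k\<in>C. \<Sum>l\<in>D. \<Sum>q\<in>B. \<Sum>p\<in>A. f p q k l)" by (intro sum.cong refl) (rule sum.swap)
  finally show ?thesis .
qed

lemma compress_index:
  assumes "M \<in> carrier_mat m m" "V \<in> carrier_mat m n" "p < n" "q < n"
  shows "(mat_adjoint V * M * V) $$ (p,q) = sesq m M (\<lambda>k. V $$ (k,p)) (\<lambda>k. V $$ (k,q))"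
proof -
  have "(mat_adjoint V * M * V) $$ (p,q) = (\<Sum>l<m. (\<Sum>k<m. cnj (V $$ (k,p)) * M $$ (k,l)) * V $$ (l,q))"
    using assms by (simp add: scalar_prod_def lessThan_atLeast0)
  also have "\<dots> = (\<Sum>l<m. \<Sum>k<m. cnj (V $$ (k,p)) * M $$ (k,l) * V $$ (l,q))"
    by (simp add: sum_distrib_right)
  also have "\<dots> = (\<Sum>k<m. \<Sum>l<m. cnj (V $$ (k,p)) * M $$ (k,l) * V $$ (l,q))"
    by (rule sum.swap)
  finally show ?thesis unfolding sesq_def .
qed

lemma sesq_compress:
  assumes "M \<in> carrier_mat m m" "V \<in> carrier_mat m n"
  shows "sesq n (mat_adjoint V * M * V) a g = sesq m M (vmul V n a) (vmul V n g)"
proof -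
  have "sesq n (mat_adjoint V * M * V) a g = (\<Sum>p<n. \<Sum>q<n. cnj (a p) * sesq m M (\<lambda>k. V $$ (k,p)) (\<lambda>k. V $$ (k,q)) * g q)"
    unfolding sesq_def[of n] using assms by (intro sum.cong refl) (auto simp del: index_mult_mat simp add: compress_index[OF assms])
  also have "\<dots> = (\<Sum>p<n. \<Sum>q<n. \<Sum>k<m. \<Sum>l<m. cnj (V $$ (k,p) * a p) * M $$ (k,l) * (V $$ (l,q) * g q))"
    unfolding sesq_def by (simp add: sum_distrib_left sum_distrib_right mult.assoc mult.left_commute)
  also have "\<dots> = (\<Sum>k<m. \<Sum>l<m. \<Sum>q<n. \<Sum>p<n. cnj (V $$ (k,p) * a p) * M $$ (k,l) * (V $$ (l,q) * g q))"
    by (rule swap4)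
  also have "\<dots> = sesq m M (vmul V n a) (vmul V n g)"
    unfolding sesq_def vmul_def by (simp add: sum_distrib_left sum_distrib_right cnj_sum)
  finally show ?thesis .
qed


lemma herm_entry: "hermitian_mat n M \<Longrightarrow> i < n \<Longrightarrow> j < n \<Longrightarrow> cnj (M $$ (j,i)) = M $$ (i,j)"
  unfolding hermitian_mat_def by (metis adj_index carrier_matD(1) carrier_matD(2))

lemma sum_mult_reindex: fixes d n :: nat shows "(\<Sum>p<d*n. f p) = (\<Sum>a<d. \<Sum>k<n. (f (a*n+k) :: 'a::comm_monoid_add))"
proof -
  have "(\<Sum>p<d*n. f p) = (\<Sum>a<d. sum f {a*n..<a*n+n})" using sum.nat_group[where g=f and k=n and n=d] by simp
  also have "\<dots> = (\<Sum>a<d. \<Sum>k<n. f (a*n+k))"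
  proof (rule sum.cong[OF refl])
    fix a
    have "sum f {0 + a*n..<n + a*n} = (\<Sum>k\<in>{0..<n}. f (k + a*n))" by (rule sum.shift_bounds_nat_ivl)
    then show "sum f {a*n..<a*n+n} = (\<Sum>k<n. f (a*n+k))" by (simp add: add.commute lessThan_atLeast0)
  qed
  finally show ?thesis .
qed

lemma quad_form: "M \<in> carrier_mat N N \<Longrightarrow> v \<in> carrier_vec N \<Longrightarrow>
  conjugate v \<bullet> (M *\<^sub>v v) = (\<Sum>p<N. \<Sum>q<N. cnj (v$p) * M $$ (p,q) * v$q)"
  by (simp add: scalar_prod_def sum_distrib_left lessThan_atLeast0 mult.assoc)

definition spec_mat :: "nat \<Rightarrow> complex mat list \<Rightarrow> nat \<Rightarrow> complex mat list \<Rightarrow> complex mat" where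
  "spec_mat d A n X = 1\<^sub>m (d * n) - mat_sum (d * n) (d * n) (length A) (\<lambda>i. kron (A ! i) (X ! i))"

definition specQ :: "nat \<Rightarrow> complex mat list \<Rightarrow> nat \<Rightarrow> complex mat list \<Rightarrow> (nat \<Rightarrow> nat \<Rightarrow> complex) \<Rightarrow> complex" where
  "specQ d A n X psi = (\<Sum>a<d. sesq n (1\<^sub>m n) (psi a) (psi a)) -
     (\<Sum>j<length A. \<Sum>a<d. \<Sum>b<d. A ! j $$ (a,b) * sesq n (X ! j) (psi a) (psi b))"

lemma spec_mat_carrier[simp]: "spec_mat d A n X \<in> carrier_mat (d*n) (d*n)"
  unfolding spec_mat_def mat_sum_def by auto

lemma spec_mat_index:
  assumes A: "\<forall>i<length A. A ! i \<in> carrier_mat d d" and X: "\<forall>i<length A. X ! i \<in> carrier_mat n n"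
    and p: "p < d*n" and q: "q < d*n"
  shows "spec_mat d A n X $$ (p,q) = (if p = q then 1 else 0) -
    (\<Sum>i<length A. A ! i $$ (p div n, q div n) * X ! i $$ (p mod n, q mod n))"
proof -
  have "kron (A ! i) (X ! i) $$ (p,q) = A ! i $$ (p div n, q div n) * X ! i $$ (p mod n, q mod n)" if "i < length A" for i
  proof -
    have "A ! i \<in> carrier_mat d d" "X ! i \<in> carrier_mat n n" using A X that by auto
    then show ?thesis using p q unfolding kron_def by auto
  qed
  then show ?thesis using p q unfolding spec_mat_def mat_sum_def by simp
qed

lemma sesq_cong: "(\<And>k. k < n \<Longrightarrow> a k = a' k) \<Longrightarrow> (\<And>k. k < n \<Longrightarrow> g k = g' k) \<Longrightarrow> sesq n M a g = sesq n M a' g'"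
  unfolding sesq_def by (intro sum.cong refl) auto

lemma specQ_cong: "(\<And>a k. a < d \<Longrightarrow> k < n \<Longrightarrow> psi a k = psi' a k) \<Longrightarrow> specQ d A n X psi = specQ d A n X psi'"
  unfolding specQ_def by (intro arg_cong2[where f = "(-)"] sum.cong refl arg_cong2[where f = "(*)"] sesq_cong) auto

lemma quad_spec:
  assumes A: "\<forall>i<length A. A ! i \<in> carrier_mat d d" and X: "\<forall>i<length A. X ! i \<in> carrier_mat n n"
    and v: "v \<in> carrier_vec (d*n)"
  shows "conjugate v \<bullet> (spec_mat d A n X *\<^sub>v v) = specQ d A n X (\<lambda>a k. v $ (a*n+k))"
proof -
  let ?psi = "\<lambda>a k. v $ (a*n+k)"
  let ?h = "length A"
  have idx: "(a*n+k) div n = a" "(a*n+k) mod n = k" if "k < n" for a k :: nat using that by auto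
  have lt: "a*n+k < d*n" if "a < d" "k < n" for a k
  proof -
    have "a*n+k < a*n+n" using that by simp
    also have "\<dots> = (a+1)*n" by simp
    also have "\<dots> \<le> d*n" using that by (intro mult_right_mono) auto
    finally show ?thesis .
  qed
  have "conjugate v \<bullet> (spec_mat d A n X *\<^sub>v v) = (\<Sum>p<d*n. \<Sum>q<d*n. cnj (v$p) * spec_mat d A n X $$ (p,q) * v$q)"
    by (rule quad_form[OF spec_mat_carrier v])
  also have "\<dots> = (\<Sum>a<d. \<Sum>k<n. \<Sum>b<d. \<Sum>l<n. cnj (?psi a k) * spec_mat d A n X $$ (a*n+k,b*n+l) * ?psi b l)"
    by (simp add: sum_mult_reindex)
  also have "\<dots> = (\<Sum>a<d. \<Sum>k<n. \<Sum>b<d. \<Sum>l<n. cnj (?psi a k) * (if a = b \<and> k = l then 1 else 0) * ?psi b l) -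
      (\<Sum>a<d. \<Sum>k<n. \<Sum>b<d. \<Sum>l<n. \<Sum>i<?h. cnj (?psi a k) * (A ! i $$ (a,b) * X ! i $$ (k,l)) * ?psi b l)"
    unfolding sum_subtractf[symmetric]
  proof (intro sum.cong refl)
    fix a k b l assume "a \<in> {..<d}" "k \<in> {..<n}" "b \<in> {..<d}" "l \<in> {..<n}"
    then have a: "a < d" and k: "k < n" and b: "b < d" and l: "l < n" by auto
    have e: "(a*n+k = b*n+l) = (a = b \<and> k = l)"
    proof
      assume "a*n+k = b*n+l"
      then have "(a*n+k) div n = (b*n+l) div n" "(a*n+k) mod n = (b*n+l) mod n" by auto
      then show "a = b \<and> k = l" using idx k l by simp
    qed auto
    show "cnj (?psi a k) * spec_mat d A n X $$ (a*n+k,b*n+l) * ?psi b l =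
      cnj (?psi a k) * (if a = b \<and> k = l then 1 else 0) * ?psi b l -
      (\<Sum>i<?h. cnj (?psi a k) * (A ! i $$ (a,b) * X ! i $$ (k,l)) * ?psi b l)"
      unfolding spec_mat_index[OF A X lt[OF a k] lt[OF b l]] idx[OF k] idx[OF l] e
      by (simp add: algebra_simps sum_distrib_left sum_distrib_right)
  qed
  also have "(\<Sum>a<d. \<Sum>k<n. \<Sum>b<d. \<Sum>l<n. cnj (?psi a k) * (if a = b \<and> k = l then 1 else 0) * ?psi b l) =
     (\<Sum>a<d. sesq n (1\<^sub>m n) (?psi a) (?psi a))"
  proof (intro sum.cong refl)
    fix a assume a: "a \<in> {..<d}"
    have "(\<Sum>k<n. \<Sum>b<d. \<Sum>l<n. cnj (?psi a k) * (if a = b \<and> k = l then 1 else 0) * ?psi b l) =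
      (\<Sum>k<n. \<Sum>b<d. (if a = b then cnj (?psi a k) * ?psi a k else 0))"
      by (intro sum.cong refl) (auto simp: if_distrib if_distribR sum.delta cong: if_cong)
    also have "\<dots> = (\<Sum>k<n. cnj (?psi a k) * ?psi a k)" using a by (simp add: sum.delta)
    also have "\<dots> = sesq n (1\<^sub>m n) (?psi a) (?psi a)"
      unfolding sesq_def by (intro sum.cong refl) (auto simp: if_distrib if_distribR sum.delta cong: if_cong)
    finally show "(\<Sum>k<n. \<Sum>b<d. \<Sum>l<n. cnj (?psi a k) * (if a = b \<and> k = l then 1 else 0) * ?psi b l) =
      sesq n (1\<^sub>m n) (?psi a) (?psi a)" .
  qed
  also have "(\<Sum>a<d. \<Sum>k<n. \<Sum>b<d. \<Sum>l<n. \<Sum>i<?h. cnj (?psi a k) * (A ! i $$ (a,b) * X ! i $$ (k,l)) * ?psi b l) =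
     (\<Sum>a<d. \<Sum>b<d. \<Sum>i<?h. \<Sum>k<n. \<Sum>l<n. cnj (?psi a k) * (A ! i $$ (a,b) * X ! i $$ (k,l)) * ?psi b l)"
  proof (rule sum.cong[OF refl])
    fix a
    have "(\<Sum>k<n. \<Sum>b<d. \<Sum>l<n. \<Sum>i<?h. cnj (?psi a k) * (A ! i $$ (a,b) * X ! i $$ (k,l)) * ?psi b l) =
      (\<Sum>b<d. \<Sum>k<n. \<Sum>l<n. \<Sum>i<?h. cnj (?psi a k) * (A ! i $$ (a,b) * X ! i $$ (k,l)) * ?psi b l)"
      by (rule sum.swap)
    also have "\<dots> = (\<Sum>b<d. \<Sum>i<?h. \<Sum>k<n. \<Sum>l<n. cnj (?psi a k) * (A ! i $$ (a,b) * X ! i $$ (k,l)) * ?psi b l)"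
      by (rule sum.cong[OF refl], rule swap3[where A="{..<?h}" and B="{..<n}" and C="{..<n}", symmetric])
    finally show "(\<Sum>k<n. \<Sum>b<d. \<Sum>l<n. \<Sum>i<?h. cnj (?psi a k) * (A ! i $$ (a,b) * X ! i $$ (k,l)) * ?psi b l) =
      (\<Sum>b<d. \<Sum>i<?h. \<Sum>k<n. \<Sum>l<n. cnj (?psi a k) * (A ! i $$ (a,b) * X ! i $$ (k,l)) * ?psi b l)" .
  qed
  also have "\<dots> = (\<Sum>i<?h. \<Sum>a<d. \<Sum>b<d. \<Sum>k<n. \<Sum>l<n. cnj (?psi a k) * (A ! i $$ (a,b) * X ! i $$ (k,l)) * ?psi b l)"
    by (rule swap3[where A="{..<?h}" and B="{..<d}" and C="{..<d}", symmetric])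
  also have "\<dots> = (\<Sum>i<?h. \<Sum>a<d. \<Sum>b<d. A ! i $$ (a,b) * sesq n (X ! i) (?psi a) (?psi b))"
    unfolding sesq_def by (simp add: sum_distrib_left algebra_simps)
  finally show ?thesis unfolding specQ_def .
qed


lemma herm_carrier: "hermitian_mat n M \<Longrightarrow> M \<in> carrier_mat n n"
  unfolding hermitian_mat_def by simp

lemma hermI: assumes "M \<in> carrier_mat n n" "\<And>i j. i < n \<Longrightarrow> j < n \<Longrightarrow> cnj (M $$ (j,i)) = M $$ (i,j)"
  shows "hermitian_mat n M"
  unfolding hermitian_mat_def using assms by (auto intro!: eq_matI)

lemma SM_carrier: "X \<in> SM_tuples h n \<Longrightarrow> i < h \<Longrightarrow> X ! i \<in> carrier_mat n n"
  unfolding SM_tuples_def hermitian_mat_def by auto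

lemma spec_mat_herm:
  assumes A: "\<forall>i<length A. hermitian_mat d (A ! i)" and X: "X \<in> SM_tuples (length A) n"
  shows "hermitian_mat (d*n) (spec_mat d A n X)"
proof (rule hermI[OF spec_mat_carrier])
  have Ac: "\<forall>i<length A. A ! i \<in> carrier_mat d d" using A herm_carrier by blast
  have Xc: "\<forall>i<length A. X ! i \<in> carrier_mat n n" using X SM_carrier by blast
  have Xh: "\<forall>i<length A. hermitian_mat n (X ! i)" using X unfolding SM_tuples_def by auto
  fix p q assume p: "p < d*n" and q: "q < d*n"
  have n0: "n > 0" using p by (cases n) auto
  have dv: "p div n < d" "q div n < d" using p q by (simp_all add: less_mult_imp_div_less)
  have md: "p mod n < n" "q mod n < n" using n0 by auto
  show "cnj (spec_mat d A n X $$ (q,p)) = spec_mat d A n X $$ (p,q)"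
    unfolding spec_mat_index[OF Ac Xc p q] spec_mat_index[OF Ac Xc q p]
    using herm_entry[OF A[rule_format] dv(1) dv(2)] herm_entry[OF Xh[rule_format] md(1) md(2)]
    by (simp add: cnj_sum)
qed

lemma spec_iff:
  assumes A: "\<forall>i<length A. hermitian_mat d (A ! i)" and X: "X \<in> SM_tuples (length A) n"
  shows "X \<in> spectrahedron d A n \<longleftrightarrow> (\<forall>psi. 0 \<le> Re (specQ d A n X psi))"
proof -
  have Ac: "\<forall>i<length A. A ! i \<in> carrier_mat d d" using A herm_carrier by blast
  have Xc: "\<forall>i<length A. X ! i \<in> carrier_mat n n" using X SM_carrier by blast
  have eq: "X \<in> spectrahedron d A n \<longleftrightarrow> (\<forall>v\<in>carrier_vec (d*n). 0 \<le> Re (conjugate v \<bullet> (spec_mat d A n X *\<^sub>v v)))"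
    unfolding spectrahedron_def psd_mat_def spec_mat_def[symmetric] using X spec_mat_herm[OF A X] by auto
  show ?thesis unfolding eq
  proof
    assume H: "\<forall>v\<in>carrier_vec (d*n). 0 \<le> Re (conjugate v \<bullet> (spec_mat d A n X *\<^sub>v v))"
    show "\<forall>psi. 0 \<le> Re (specQ d A n X psi)"
    proof
      fix psi :: "nat \<Rightarrow> nat \<Rightarrow> complex"
      define v where "v = vec (d*n) (\<lambda>p. psi (p div n) (p mod n))"
      have v: "v \<in> carrier_vec (d*n)" unfolding v_def by simp
      have "specQ d A n X (\<lambda>a k. (v :: complex vec) $ (a*n+k)) = specQ d A n X psi"
      proof (rule specQ_cong)
        fix a k assume a: "a < d" and k: "k < n"
        have "a*n+k < a*n+n" using k by simp
        also have "\<dots> = (a+1)*n" by simp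
        also have "\<dots> \<le> d*n" using a by (intro mult_right_mono) auto
        finally have "a*n+k < d*n" .
        then show "v $ (a*n+k) = psi a k" unfolding v_def using k by simp
      qed
      then show "0 \<le> Re (specQ d A n X psi)" using H v quad_spec[OF Ac Xc v] by metis
    qed
  next
    assume H: "\<forall>psi. 0 \<le> Re (specQ d A n X psi)"
    show "\<forall>v\<in>carrier_vec (d*n). 0 \<le> Re (conjugate v \<bullet> (spec_mat d A n X *\<^sub>v v))"
      using H quad_spec[OF Ac Xc] by metis
  qed
qed

lemma sesq_herm_cnj:
  assumes "hermitian_mat m M" shows "cnj (sesq m M a g) = sesq m M g a"
proof -
  have "cnj (sesq m M a g) = (\<Sum>k<m. \<Sum>l<m. a k * cnj (M $$ (k,l)) * cnj (g l))"
    unfolding sesq_def by (simp add: cnj_sum)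
  also have "\<dots> = (\<Sum>k<m. \<Sum>l<m. cnj (g l) * M $$ (l,k) * a k)"
    using herm_entry[OF assms] by (intro sum.cong refl) (simp add: mult.commute mult.left_commute)
  also have "\<dots> = sesq m M g a" unfolding sesq_def by (rule sum.swap)
  finally show ?thesis .
qed

lemma compress_herm:
  assumes M: "hermitian_mat m M" and V: "V \<in> carrier_mat m n"
  shows "hermitian_mat n (mat_adjoint V * M * V)"
proof (rule hermI)
  show "mat_adjoint V * M * V \<in> carrier_mat n n" using V herm_carrier[OF M] by auto
  fix i j assume "i < n" "j < n"
  then show "cnj ((mat_adjoint V * M * V) $$ (j,i)) = (mat_adjoint V * M * V) $$ (i,j)"
    using compress_index[OF herm_carrier[OF M] V] sesq_herm_cnj[OF M] by simp
qed

lemma compress_spec: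
  assumes A: "\<forall>i<length A. hermitian_mat d (A ! i)" and W: "W \<in> spectrahedron d A m"
    and V: "V \<in> carrier_mat m n" and iso: "mat_adjoint V * V = 1\<^sub>m n"
  shows "map (\<lambda>M. mat_adjoint V * M * V) W \<in> spectrahedron d A n"
proof -
  let ?W = "map (\<lambda>M. mat_adjoint V * M * V) W"
  have WS: "W \<in> SM_tuples (length A) m" using W unfolding spectrahedron_def by auto
  have Wh: "\<forall>i<length A. hermitian_mat m (W ! i)" using WS unfolding SM_tuples_def by auto
  have lenW: "length W = length A" using WS unfolding SM_tuples_def by auto
  have S: "?W \<in> SM_tuples (length A) n"
    unfolding SM_tuples_def using lenW Wh compress_herm[OF _ V] by auto
  have one: "mat_adjoint V * 1\<^sub>m m * V = 1\<^sub>m n" using V iso by simp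
  have "specQ d A n ?W psi = specQ d A m W (\<lambda>a. vmul V n (psi a))" for psi
  proof -
    have "sesq n (1\<^sub>m n) (psi a) (psi a) = sesq m (1\<^sub>m m) (vmul V n (psi a)) (vmul V n (psi a))" for a
      using sesq_compress[OF one_carrier_mat V] unfolding one by simp
    moreover have "sesq n (?W ! j) (psi a) (psi b) = sesq m (W ! j) (vmul V n (psi a)) (vmul V n (psi b))"
      if "j < length A" for j a b
      using that lenW sesq_compress[OF herm_carrier[OF Wh[rule_format, OF that]] V] by simp
    ultimately show ?thesis unfolding specQ_def by simp
  qed
  then show ?thesis using spec_iff[OF A S] spec_iff[OF A WS] W by simp
qed


definition pt :: "(nat \<Rightarrow> real) \<Rightarrow> nat \<Rightarrow> complex mat list" where
  "pt f h = map (\<lambda>j. mat 1 1 (\<lambda>_. complex_of_real (f j))) [0..<h]"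

definition formF :: "nat \<Rightarrow> (nat \<Rightarrow> nat \<Rightarrow> complex) \<Rightarrow> (nat \<Rightarrow> complex) \<Rightarrow> (nat \<Rightarrow> complex) \<Rightarrow> complex" where
  "formF d F a g = (\<Sum>x<d. \<Sum>y<d. cnj (a x) * F x y * g y)"

definition LA :: "complex mat list \<Rightarrow> (nat \<Rightarrow> real) \<Rightarrow> nat \<Rightarrow> nat \<Rightarrow> complex" where
  "LA A f x y = (if x = y then 1 else 0) - (\<Sum>j<length A. complex_of_real (f j) * A ! j $$ (x,y))"

definition BA :: "complex mat list \<Rightarrow> (nat \<Rightarrow> real) \<Rightarrow> nat \<Rightarrow> nat \<Rightarrow> complex" where
  "BA A f x y = (\<Sum>j<length A. complex_of_real (f j) * A ! j $$ (x,y))"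

lemma pt_length[simp]: "length (pt f h) = h" unfolding pt_def by simp
lemma pt_nth[simp]: "j < h \<Longrightarrow> pt f h ! j = mat 1 1 (\<lambda>_. complex_of_real (f j))" unfolding pt_def by simp
lemma take_pt: "g \<le> h \<Longrightarrow> take g (pt f h) = pt f g"
  unfolding pt_def by (simp add: take_map)

lemma pt_eq_iff: "pt f h = pt f' h \<longleftrightarrow> (\<forall>j<h. f j = f' j)"
proof
  assume "pt f h = pt f' h"
  then have "\<forall>j<h. pt f h ! j $$ (0,0) = pt f' h ! j $$ (0,0)" by simp
  then show "\<forall>j<h. f j = f' j" by simp
qed (auto simp: pt_def)

lemma pt_SM: "pt f h \<in> SM_tuples h 1"
  unfolding SM_tuples_def hermitian_mat_def by (auto intro!: eq_matI)

lemma SM1_pt: assumes "X \<in> SM_tuples h 1" shows "X = pt (\<lambda>j. Re (X ! j $$ (0,0))) h"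
proof (rule nth_equalityI)
  show "length X = length (pt (\<lambda>j. Re (X ! j $$ (0,0))) h)" using assms unfolding SM_tuples_def by simp
  fix j assume "j < length X"
  then have j: "j < h" using assms unfolding SM_tuples_def by simp
  have H: "hermitian_mat 1 (X ! j)" using assms j unfolding SM_tuples_def by simp
  have c: "X ! j \<in> carrier_mat 1 1" using herm_carrier[OF H] .
  have "cnj (X ! j $$ (0,0)) = X ! j $$ (0,0)" using herm_entry[OF H, of 0 0] by simp
  then have r: "X ! j $$ (0,0) = complex_of_real (Re (X ! j $$ (0,0)))"
    by (metis Reals_cnj_iff complex_is_Real_iff complex_eq_iff of_real_Re)
  show "X ! j = pt (\<lambda>j. Re (X ! j $$ (0,0))) h ! j"
    using c j r by (auto intro!: eq_matI)
qed

lemma sesq1: "sesq 1 M a g = cnj (a 0) * M $$ (0,0) * g 0" unfolding sesq_def by simp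

lemma delta_sum: fixes x d :: nat shows "x < d \<Longrightarrow> (\<Sum>y<d. cnj (a x) * (if x = y then 1 else 0) * a y) = cnj (a x) * a x"
proof -
  assume x: "x < d"
  have "(\<Sum>y<d. cnj (a x) * (if x = y then 1 else 0) * a y) = (\<Sum>y<d. if x = y then cnj (a x) * a y else 0)"
    by (rule sum.cong) auto
  also have "\<dots> = cnj (a x) * a x" using x by (subst sum.delta') auto
  finally show ?thesis .
qed

lemma formF_LA: "formF d (LA A f) a a = (\<Sum>x<d. cnj (a x) * a x) -
   (\<Sum>j<length A. \<Sum>x<d. \<Sum>y<d. A ! j $$ (x,y) * (cnj (a x) * complex_of_real (f j) * a y))"
proof -
  have "formF d (LA A f) a a = (\<Sum>x<d. \<Sum>y<d. cnj (a x) * (if x = y then 1 else 0) * a y) -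
     (\<Sum>x<d. \<Sum>y<d. \<Sum>j<length A. cnj (a x) * (complex_of_real (f j) * A ! j $$ (x,y)) * a y)"
    unfolding formF_def LA_def sum_subtractf[symmetric]
    by (intro sum.cong refl) (simp add: algebra_simps sum_distrib_left sum_distrib_right)
  also have "(\<Sum>x<d. \<Sum>y<d. cnj (a x) * (if x = y then 1 else 0) * a y) = (\<Sum>x<d. cnj (a x) * a x)"
    by (rule sum.cong[OF refl]) (simp add: delta_sum)
  also have "(\<Sum>x<d. \<Sum>y<d. \<Sum>j<length A. cnj (a x) * (complex_of_real (f j) * A ! j $$ (x,y)) * a y) =
     (\<Sum>j<length A. \<Sum>x<d. \<Sum>y<d. cnj (a x) * (complex_of_real (f j) * A ! j $$ (x,y)) * a y)"
    by (rule swap3[where A="{..<length A}" and B="{..<d}" and C="{..<d}", symmetric])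
  also have "\<dots> = (\<Sum>j<length A. \<Sum>x<d. \<Sum>y<d. A ! j $$ (x,y) * (cnj (a x) * complex_of_real (f j) * a y))"
    by (simp add: mult_ac)
  finally show ?thesis .
qed

lemma spec1:
  "length A = h \<Longrightarrow> specQ d A 1 (pt f h) psi = formF d (LA A f) (\<lambda>x. psi x 0) (\<lambda>x. psi x 0)"
  unfolding specQ_def formF_LA sesq1 by simp

lemma pt_in:
  assumes A: "\<forall>i<length A. hermitian_mat d (A ! i)"
  shows "pt f (length A) \<in> spectrahedron d A 1 \<longleftrightarrow> (\<forall>u. 0 \<le> Re (formF d (LA A f) u u))"
proof -
  have "pt f (length A) \<in> spectrahedron d A 1 \<longleftrightarrow> (\<forall>psi. 0 \<le> Re (specQ d A 1 (pt f (length A)) psi))"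
    by (rule spec_iff[OF A pt_SM])
  also have "\<dots> \<longleftrightarrow> (\<forall>psi::nat\<Rightarrow>nat\<Rightarrow>complex. 0 \<le> Re (formF d (LA A f) (\<lambda>x. psi x 0) (\<lambda>x. psi x 0)))"
    by (simp only: spec1[OF refl])
  also have "\<dots> \<longleftrightarrow> (\<forall>u. 0 \<le> Re (formF d (LA A f) u u))"
  proof
    assume H: "\<forall>psi::nat\<Rightarrow>nat\<Rightarrow>complex. 0 \<le> Re (formF d (LA A f) (\<lambda>x. psi x 0) (\<lambda>x. psi x 0))"
    show "\<forall>u. 0 \<le> Re (formF d (LA A f) u u)"
    proof
      fix u :: "nat \<Rightarrow> complex"
      show "0 \<le> Re (formF d (LA A f) u u)" using H[rule_format, of "\<lambda>x k. u x"] by simp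
    qed
  qed auto
  finally show ?thesis .
qed


lemma formF_sesq:
  assumes H: "\<And>x y. x < d \<Longrightarrow> y < d \<Longrightarrow> F y x = cnj (F x y)"
  shows "sesq_form d (formF d F)"
  unfolding sesq_form_def
proof (intro conjI allI)
  fix a a' g show "formF d F (\<lambda>k. a k + a' k) g = formF d F a g + formF d F a' g"
    unfolding formF_def by (simp add: ring_distribs sum.distrib)
next
  fix c a g show "formF d F (\<lambda>k. c * a k) g = cnj c * formF d F a g"
    unfolding formF_def by (simp add: algebra_simps sum_distrib_left)
next
  fix a g
  have "cnj (formF d F a g) = (\<Sum>x<d. \<Sum>y<d. a x * cnj (F x y) * cnj (g y))"
    unfolding formF_def by (simp add: cnj_sum)
  also have "\<dots> = (\<Sum>x<d. \<Sum>y<d. cnj (g y) * F y x * a x)"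
  proof (intro sum.cong refl)
    fix x y assume "x \<in> {..<d}" "y \<in> {..<d}"
    then have "cnj (F x y) = F y x" using H[of x y] by simp
    then show "a x * cnj (F x y) * cnj (g y) = cnj (g y) * F y x * a x" by (simp add: mult_ac)
  qed
  also have "\<dots> = formF d F g a" unfolding formF_def by (rule sum.swap)
  finally show "formF d F g a = cnj (formF d F a g)" by simp
next
  fix a g show "formF d F a g = formF d F (trunc d a) (trunc d g)"
    unfolding formF_def trunc_def by (intro sum.cong refl) auto
qed

lemma LA_herm:
  assumes A: "\<forall>i<length A. hermitian_mat d (A ! i)" and x: "x < d" and y: "y < d"
  shows "LA A f y x = cnj (LA A f x y)"
  unfolding LA_def using herm_entry[OF A[rule_format] y x] by (simp add: cnj_sum)

lemma BA_herm:
  assumes A: "\<forall>i<length A. hermitian_mat d (A ! i)" and x: "x < d" and y: "y < d"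
  shows "BA A f y x = cnj (BA A f x y)"
  unfolding BA_def using herm_entry[OF A[rule_format] y x] by (simp add: cnj_sum)

lemma formF_diff: "formF d (\<lambda>x y. F x y - c * G x y) a g = formF d F a g - c * formF d G a g"
  unfolding formF_def by (simp add: algebra_simps sum_subtractf sum_distrib_left)

lemma LA_shift: "LA A (\<lambda>j. w j + t * b j) = (\<lambda>x y. LA A w x y - complex_of_real t * BA A b x y)"
  unfolding LA_def BA_def by (intro ext) (simp add: algebra_simps sum.distrib sum_distrib_left)

lemma convex1:
  assumes A: "\<forall>i<length A. hermitian_mat d (A ! i)" and I: "finite I"
    and s0: "\<And>i. i \<in> I \<Longrightarrow> s i \<ge> 0" and s1: "(\<Sum>i\<in>I. s i) = 1"
    and P: "\<And>i. i \<in> I \<Longrightarrow> pt (p i) (length A) \<in> spectrahedron d A 1"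
  shows "pt (\<lambda>j. \<Sum>i\<in>I. s i * p i j) (length A) \<in> spectrahedron d A 1"
  unfolding pt_in[OF A]
proof
  fix u
  have LAs: "LA A (\<lambda>j. \<Sum>i\<in>I. s i * p i j) x y = (\<Sum>i\<in>I. complex_of_real (s i) * LA A (p i) x y)" for x y
  proof -
    have "(\<Sum>i\<in>I. complex_of_real (s i) * LA A (p i) x y) =
      (\<Sum>i\<in>I. complex_of_real (s i) * (if x = y then 1 else 0)) -
      (\<Sum>i\<in>I. \<Sum>j<length A. complex_of_real (s i) * (complex_of_real (p i j) * A ! j $$ (x,y)))"
      unfolding LA_def by (simp add: right_diff_distrib sum_subtractf sum_distrib_left)
    also have "(\<Sum>i\<in>I. complex_of_real (s i) * (if x = y then 1 else 0)) = (if x = y then 1 else 0)"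
    proof -
      have "(\<Sum>i\<in>I. complex_of_real (s i)) = 1" using s1 by (metis of_real_1 of_real_sum)
      then show ?thesis by (simp add: sum_distrib_right[symmetric])
    qed
    also have "(\<Sum>i\<in>I. \<Sum>j<length A. complex_of_real (s i) * (complex_of_real (p i j) * A ! j $$ (x,y))) =
      (\<Sum>j<length A. \<Sum>i\<in>I. complex_of_real (s i) * (complex_of_real (p i j) * A ! j $$ (x,y)))"
      by (rule sum.swap)
    also have "\<dots> = (\<Sum>j<length A. complex_of_real (\<Sum>i\<in>I. s i * p i j) * A ! j $$ (x,y))"
      by (simp add: of_real_sum sum_distrib_right mult.assoc)
    finally show ?thesis unfolding LA_def by simp
  qed
  have "formF d (LA A (\<lambda>j. \<Sum>i\<in>I. s i * p i j)) u u = (\<Sum>x<d. \<Sum>y<d. \<Sum>i\<in>I. complex_of_real (s i) * (cnj (u x) * LA A (p i) x y * u y))"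
    unfolding formF_def LAs by (simp add: sum_distrib_left sum_distrib_right mult_ac)
  also have "\<dots> = (\<Sum>i\<in>I. \<Sum>x<d. \<Sum>y<d. complex_of_real (s i) * (cnj (u x) * LA A (p i) x y * u y))"
    by (rule swap3[where A=I and B="{..<d}" and C="{..<d}", symmetric])
  also have "\<dots> = (\<Sum>i\<in>I. complex_of_real (s i) * formF d (LA A (p i)) u u)"
    unfolding formF_def by (simp add: sum_distrib_left)
  finally have "Re (formF d (LA A (\<lambda>j. \<Sum>i\<in>I. s i * p i j)) u u) = (\<Sum>i\<in>I. s i * Re (formF d (LA A (p i)) u u))"
    by (simp add: Re_sum)
  also have "\<dots> \<ge> 0" using s0 P pt_in[OF A] by (intro sum_nonneg mult_nonneg_nonneg) auto
  finally show "0 \<le> Re (formF d (LA A (\<lambda>j. \<Sum>i\<in>I. s i * p i j)) u u)" .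
qed

lemma tuple_comb_pt:
  "tuple_add (tuple_scale t (pt f g)) (tuple_scale (1 - t) (pt f' g)) = pt (\<lambda>j. t * f j + (1 - t) * f' j) g"
  unfolding tuple_add_def tuple_scale_def pt_def
  by (rule nth_equalityI) (auto intro!: eq_matI)

lemma extreme_pt:
  assumes E: "euclidean_extreme_point x S" and f: "pt f g \<in> S" and f': "pt f' g \<in> S"
    and t: "0 < t" "t < 1" and x: "x = pt (\<lambda>j. t * f j + (1 - t) * f' j) g"
  shows "\<forall>j<g. f j = f' j"
proof -
  have "pt f g = pt f' g"
    using E f f' t x tuple_comb_pt[of t f g f'] unfolding euclidean_extreme_point_def by metis
  then show ?thesis by (simp add: pt_eq_iff)
qed

lemma level1_compress:
  assumes A: "\<forall>i<length A. hermitian_mat d (A ! i)" and W: "W \<in> spectrahedron d A m"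
    and u: "(\<Sum>k<m. cnj (u k) * u k) = 1"
  shows "pt (\<lambda>j. Re (sesq m (W ! j) u u)) (length A) \<in> spectrahedron d A 1"
proof -
  define V where "V = mat m 1 (\<lambda>(k,c). u k)"
  have V: "V \<in> carrier_mat m 1" unfolding V_def by simp
  have iso: "mat_adjoint V * V = 1\<^sub>m 1"
    by (rule eq_matI) (use u in \<open>auto simp: V_def scalar_prod_def lessThan_atLeast0 mult.commute\<close>)
  let ?W = "map (\<lambda>M. mat_adjoint V * M * V) W"
  have in1: "?W \<in> spectrahedron d A 1" by (rule compress_spec[OF A W V iso])
  have WS: "W \<in> SM_tuples (length A) m" using W unfolding spectrahedron_def by auto
  have lenW: "length W = length A" using WS unfolding SM_tuples_def by simp
  have S1: "?W \<in> SM_tuples (length A) 1" using in1 unfolding spectrahedron_def by auto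
  have "?W = pt (\<lambda>j. Re (?W ! j $$ (0,0))) (length A)" by (rule SM1_pt[OF S1])
  also have "\<dots> = pt (\<lambda>j. Re (sesq m (W ! j) u u)) (length A)"
  proof (unfold pt_eq_iff, intro allI impI)
    fix j assume j: "j < length A"
    have Wj: "W ! j \<in> carrier_mat m m" using SM_carrier[OF WS j] .
    have "?W ! j $$ (0,0) = sesq m (W ! j) (\<lambda>k. V $$ (k,0)) (\<lambda>k. V $$ (k,0))"
      using j lenW compress_index[OF Wj V] by simp
    also have "\<dots> = sesq m (W ! j) u u" by (rule sesq_cong) (auto simp: V_def)
    finally show "Re (?W ! j $$ (0,0)) = Re (sesq m (W ! j) u u)" by simp
  qed
  finally show ?thesis using in1 by simp
qed


lemma formF_BA: "formF d (BA A f) a g =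
   (\<Sum>j<length A. \<Sum>x<d. \<Sum>y<d. A ! j $$ (x,y) * (cnj (a x) * complex_of_real (f j) * g y))"
proof -
  have "formF d (BA A f) a g = (\<Sum>x<d. \<Sum>y<d. \<Sum>j<length A. cnj (a x) * (complex_of_real (f j) * A ! j $$ (x,y)) * g y)"
    unfolding formF_def BA_def by (simp add: sum_distrib_left sum_distrib_right)
  also have "\<dots> = (\<Sum>j<length A. \<Sum>x<d. \<Sum>y<d. cnj (a x) * (complex_of_real (f j) * A ! j $$ (x,y)) * g y)"
    by (rule swap3[where A="{..<length A}" and B="{..<d}" and C="{..<d}", symmetric])
  also have "\<dots> = (\<Sum>j<length A. \<Sum>x<d. \<Sum>y<d. A ! j $$ (x,y) * (cnj (a x) * complex_of_real (f j) * g y))"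
    by (simp add: mult_ac)
  finally show ?thesis .
qed

lemma sesq2: "sesq 2 M a g = cnj (a 0) * M $$ (0,0) * g 0 + cnj (a 0) * M $$ (0,1) * g 1 +
   cnj (a 1) * M $$ (1,0) * g 0 + cnj (a 1) * M $$ (1,1) * g 1"
  unfolding sesq_def by (simp add: numeral_2_eq_2 lessThan_Suc)

lemma spec2_sum:
  assumes l1: "length X1 = length A" and l2: "length X2 = length A"
    and e00: "\<And>j. j < length A \<Longrightarrow> X1 ! j $$ (0,0) = of_real (aw j) \<and> X2 ! j $$ (0,0) = of_real (aw j)"
    and e11: "\<And>j. j < length A \<Longrightarrow> X1 ! j $$ (1,1) = of_real (cw j) \<and> X2 ! j $$ (1,1) = of_real (cw j)"
    and e01: "\<And>j. j < length A \<Longrightarrow> X1 ! j $$ (0,1) + X2 ! j $$ (0,1) = 2 * of_real (bt j)"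
    and e10: "\<And>j. j < length A \<Longrightarrow> X1 ! j $$ (1,0) + X2 ! j $$ (1,0) = 2 * of_real (bt j)"
  shows "specQ d A 2 X1 (\<lambda>x k. if k = 0 then al x else ga x) + specQ d A 2 X2 (\<lambda>x k. if k = 0 then al x else ga x) =
    2 * (formF d (LA A aw) al al + formF d (LA A cw) ga ga - formF d (BA A bt) al ga - formF d (BA A bt) ga al)"
proof -
  let ?psi = "\<lambda>x k. if k = 0 then al x else ga x"
  have one: "sesq 2 (1\<^sub>m 2) (?psi x) (?psi x) = cnj (al x) * al x + cnj (ga x) * ga x" for x
    unfolding sesq2 by simp
  have T: "A ! j $$ (x,y) * sesq 2 (X1 ! j) (?psi x) (?psi y) + A ! j $$ (x,y) * sesq 2 (X2 ! j) (?psi x) (?psi y) =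
     2 * (A ! j $$ (x,y) * (cnj (al x) * complex_of_real (aw j) * al y)) +
     2 * (A ! j $$ (x,y) * (cnj (ga x) * complex_of_real (cw j) * ga y)) +
     2 * (A ! j $$ (x,y) * (cnj (al x) * complex_of_real (bt j) * ga y)) +
     2 * (A ! j $$ (x,y) * (cnj (ga x) * complex_of_real (bt j) * al y))" if j: "j < length A" for j x y
  proof -
    have s: "sesq 2 (X1 ! j) (?psi x) (?psi y) + sesq 2 (X2 ! j) (?psi x) (?psi y) =
      cnj (al x) * (X1 ! j $$ (0,0) + X2 ! j $$ (0,0)) * al y + cnj (al x) * (X1 ! j $$ (0,1) + X2 ! j $$ (0,1)) * ga y +
      cnj (ga x) * (X1 ! j $$ (1,0) + X2 ! j $$ (1,0)) * al y + cnj (ga x) * (X1 ! j $$ (1,1) + X2 ! j $$ (1,1)) * ga y"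
      unfolding sesq2 by (simp add: algebra_simps)
    have q1: "X2 ! j $$ (0,1) = 2 * of_real (bt j) - X1 ! j $$ (0,1)" using e01[OF j] by (simp add: algebra_simps)
    have q2: "X2 ! j $$ (1,0) = 2 * of_real (bt j) - X1 ! j $$ (1,0)" using e10[OF j] by (simp add: algebra_simps)
    have "A ! j $$ (x,y) * sesq 2 (X1 ! j) (?psi x) (?psi y) + A ! j $$ (x,y) * sesq 2 (X2 ! j) (?psi x) (?psi y) =
      A ! j $$ (x,y) * (sesq 2 (X1 ! j) (?psi x) (?psi y) + sesq 2 (X2 ! j) (?psi x) (?psi y))" by (simp add: distrib_left)
    also have "\<dots> = A ! j $$ (x,y) * (cnj (al x) * (2 * of_real (aw j)) * al y + cnj (al x) * (2 * of_real (bt j)) * ga y +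
      cnj (ga x) * (2 * of_real (bt j)) * al y + cnj (ga x) * (2 * of_real (cw j)) * ga y)"
      unfolding s q1 q2 using e00[OF j] e11[OF j] by simp
    finally show ?thesis by (simp add: algebra_simps)
  qed
  have "specQ d A 2 X1 ?psi + specQ d A 2 X2 ?psi =
    2 * (\<Sum>x<d. cnj (al x) * al x) + 2 * (\<Sum>x<d. cnj (ga x) * ga x) -
    (\<Sum>j<length A. \<Sum>x<d. \<Sum>y<d. A ! j $$ (x,y) * sesq 2 (X1 ! j) (?psi x) (?psi y) + A ! j $$ (x,y) * sesq 2 (X2 ! j) (?psi x) (?psi y))"
    unfolding specQ_def one l1 l2 by (simp add: sum.distrib algebra_simps)
  also have "(\<Sum>j<length A. \<Sum>x<d. \<Sum>y<d. A ! j $$ (x,y) * sesq 2 (X1 ! j) (?psi x) (?psi y) + A ! j $$ (x,y) * sesq 2 (X2 ! j) (?psi x) (?psi y)) =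
    (\<Sum>j<length A. \<Sum>x<d. \<Sum>y<d. 2 * (A ! j $$ (x,y) * (cnj (al x) * complex_of_real (aw j) * al y)) +
     2 * (A ! j $$ (x,y) * (cnj (ga x) * complex_of_real (cw j) * ga y)) +
     2 * (A ! j $$ (x,y) * (cnj (al x) * complex_of_real (bt j) * ga y)) +
     2 * (A ! j $$ (x,y) * (cnj (ga x) * complex_of_real (bt j) * al y)))"
    by (intro sum.cong refl) (simp add: T)
  finally show ?thesis
    unfolding formF_LA formF_BA by (simp add: sum.distrib sum_distrib_left algebra_simps)
qed


lemma sesq_row: "sesq m M a g = (\<Sum>k<m. cnj (a k) * (\<Sum>l<m. M $$ (k,l) * g l))"
  unfolding sesq_def by (simp add: sum_distrib_left mult.assoc)

lemma sesq_real: assumes "hermitian_mat m M" shows "sesq m M a a = of_real (Re (sesq m M a a))"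
proof -
  have "cnj (sesq m M a a) = sesq m M a a" by (rule sesq_herm_cnj[OF assms])
  then show ?thesis by (metis Reals_cnj_iff complex_is_Real_iff of_real_Re)
qed

lemma cnj_mult_self: "cnj z * z = complex_of_real ((cmod z)^2)"
  using complex_norm_square[of z] by (simp add: mult.commute)

lemma cnj_add_self: "cnj z + z = 2 * complex_of_real (Re z)" "z + cnj z = 2 * complex_of_real (Re z)"
  by (simp_all add: complex_eq_iff)

lemma reduce:
  assumes A: "\<forall>i<length A. hermitian_mat d (A ! i)" and gh: "g \<le> length A"
    and conjH: "\<forall>X\<in>spectrahedron d A 2. map (map_mat cnj) X \<in> spectrahedron d A 2"
    and E: "euclidean_extreme_point x (proj_graded g (spectrahedron d A) 1)"
    and W: "W \<in> spectrahedron d A m" and u: "(\<Sum>k<m. cnj (u k) * u k) = 1"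
    and xu: "x = pt (\<lambda>j. Re (sesq m (W ! j) u u)) g"
  shows "\<forall>j<g. \<forall>k<m. (\<Sum>l<m. W ! j $$ (k,l) * u l) = of_real (Re (sesq m (W ! j) u u)) * u k"
proof (rule ccontr)
  assume "\<not> ?thesis"
  then obtain j0 k0 where j0: "j0 < g" and k0: "k0 < m"
    and ne: "(\<Sum>l<m. W ! j0 $$ (k0,l) * u l) \<noteq> of_real (Re (sesq m (W ! j0) u u)) * u k0" by blast
  define aw where "aw j = Re (sesq m (W ! j) u u)" for j
  have WS: "W \<in> SM_tuples (length A) m" using W unfolding spectrahedron_def by auto
  have lenW: "length W = length A" using WS unfolding SM_tuples_def by simp
  have Wh: "hermitian_mat m (W ! j)" if "j < length A" for j using WS that unfolding SM_tuples_def by simp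
  have Wc: "W ! j \<in> carrier_mat m m" if "j < length A" for j using herm_carrier[OF Wh[OF that]] .
  have j0A: "j0 < length A" using j0 gh by simp
  define r where "r k = (\<Sum>l<m. W ! j0 $$ (k,l) * u l) - of_real (aw j0) * u k" for k
  define rho where "rho = (\<Sum>k<m. (cmod (r k))^2)"
  have "r k0 \<noteq> 0" using ne unfolding r_def aw_def by simp
  then have "(cmod (r k0))^2 > 0" by simp
  also have "(cmod (r k0))^2 \<le> rho" unfolding rho_def using k0 by (intro member_le_sum) auto
  finally have rho0: "rho > 0" .
  define w where "w k = r k / of_real (sqrt rho)" for k
  have o1: "(\<Sum>k<m. cnj (w k) * w k) = 1"
  proof -
    have "(\<Sum>k<m. cnj (w k) * w k) = (\<Sum>k<m. cnj (r k) * r k) / of_real rho"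
    proof -
      have sq: "(complex_of_real (sqrt rho))^2 = complex_of_real rho" using rho0 by (simp flip: of_real_power)
      show ?thesis unfolding w_def using rho0 by (simp add: sum_divide_distrib power2_eq_square[symmetric] sq)
    qed
    also have "(\<Sum>k<m. cnj (r k) * r k) = of_real rho" unfolding rho_def cnj_mult_self by simp
    finally show ?thesis using rho0 by simp
  qed
  have o2r: "(\<Sum>k<m. cnj (u k) * r k) = 0"
  proof -
    have "(\<Sum>k<m. cnj (u k) * r k) = sesq m (W ! j0) u u - of_real (aw j0) * (\<Sum>k<m. cnj (u k) * u k)"
      unfolding r_def sesq_row by (simp add: algebra_simps sum_subtractf sum_distrib_left)
    also have "\<dots> = 0" unfolding u aw_def using sesq_real[OF Wh[OF j0A]] by simp
    finally show ?thesis .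
  qed
  have o2: "(\<Sum>k<m. cnj (u k) * w k) = 0"
  proof -
    have "(\<Sum>k<m. cnj (u k) * w k) = (\<Sum>k<m. cnj (u k) * r k) / of_real (sqrt rho)"
      unfolding w_def by (simp add: sum_divide_distrib)
    then show ?thesis using o2r by simp
  qed
  have o3: "(\<Sum>k<m. cnj (w k) * u k) = 0"
  proof -
    have "(\<Sum>k<m. cnj (w k) * u k) = cnj (\<Sum>k<m. cnj (u k) * w k)" by (simp add: cnj_sum mult.commute)
    then show ?thesis using o2 by simp
  qed
  define V where "V = mat m 2 (\<lambda>(k,c). if c = 0 then u k else w k)"
  have V: "V \<in> carrier_mat m 2" unfolding V_def by simp
  have iso: "mat_adjoint V * V = 1\<^sub>m 2"
  proof (rule eq_matI)
    fix i j assume i: "i < dim_row (1\<^sub>m 2 :: complex mat)" and j: "j < dim_col (1\<^sub>m 2 :: complex mat)"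
    then have i2: "i = 0 \<or> i = 1" and j2: "j = 0 \<or> j = 1" by auto
    have "(mat_adjoint V * V) $$ (i,j) = (\<Sum>k<m. cnj (V $$ (k,i)) * V $$ (k,j))"
      using i j V by (simp add: scalar_prod_def lessThan_atLeast0)
    also have "\<dots> = (1\<^sub>m 2 :: complex mat) $$ (i,j)"
    proof -
      have s: "(\<Sum>k<m. cnj (V $$ (k,i)) * V $$ (k,j)) = (\<Sum>k<m. cnj (if i = 0 then u k else w k) * (if j = 0 then u k else w k))"
        using i j by (intro sum.cong refl) (simp add: V_def)
      show ?thesis unfolding s using i2 j2 u o1 o2 o3 by auto
    qed
    finally show "(mat_adjoint V * V) $$ (i,j) = (1\<^sub>m 2 :: complex mat) $$ (i,j)" .
  qed (use V in auto)
  define X1 where "X1 = map (\<lambda>M. mat_adjoint V * M * V) W"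
  define X2 where "X2 = map (map_mat cnj) X1"
  have X1in: "X1 \<in> spectrahedron d A 2" unfolding X1_def by (rule compress_spec[OF A W V iso])
  have X2in: "X2 \<in> spectrahedron d A 2" unfolding X2_def using conjH X1in by blast
  have X1S: "X1 \<in> SM_tuples (length A) 2" using X1in unfolding spectrahedron_def by auto
  have X2S: "X2 \<in> SM_tuples (length A) 2" using X2in unfolding spectrahedron_def by auto
  have col0: "sesq m M (\<lambda>k. V $$ (k,0)) g = sesq m M u g" "sesq m M g (\<lambda>k. V $$ (k,0)) = sesq m M g u"
    "sesq m M (\<lambda>k. V $$ (k,1)) g = sesq m M w g" "sesq m M g (\<lambda>k. V $$ (k,1)) = sesq m M g w" for M g
    by (auto intro!: sesq_cong simp: V_def)
  have X1e: "X1 ! j $$ (p,q) = sesq m (W ! j) (\<lambda>k. V $$ (k,p)) (\<lambda>k. V $$ (k,q))"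
    if "j < length A" "p < 2" "q < 2" for j p q
    unfolding X1_def using that lenW compress_index[OF Wc[OF that(1)] V] by simp
  have X1c: "X1 ! j \<in> carrier_mat 2 2" if "j < length A" for j using X1S that SM_carrier by blast
  have X2e: "X2 ! j $$ (p,q) = cnj (X1 ! j $$ (p,q))" if j: "j < length A" and pq: "p < 2" "q < 2" for j p q
  proof -
    have "length X1 = length A" unfolding X1_def using lenW by simp
    then have "X2 ! j = map_mat cnj (X1 ! j)" unfolding X2_def using j by simp
    then show ?thesis using X1c[OF j] pq by auto
  qed
  define cw where "cw j = Re (sesq m (W ! j) w w)" for j
  define bt where "bt j = Re (sesq m (W ! j) w u)" for j
  have e00: "X1 ! j $$ (0,0) = of_real (aw j) \<and> X2 ! j $$ (0,0) = of_real (aw j)" if j: "j < length A" for j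
  proof -
    have "X1 ! j $$ (0,0) = of_real (aw j)" using X1e[OF j] col0 sesq_real[OF Wh[OF j]] unfolding aw_def by simp
    moreover have "X2 ! j $$ (0,0) = cnj (X1 ! j $$ (0,0))" using X2e[OF j] by simp
    ultimately show ?thesis by simp
  qed
  have e11: "X1 ! j $$ (1,1) = of_real (cw j) \<and> X2 ! j $$ (1,1) = of_real (cw j)" if j: "j < length A" for j
  proof -
    have "X1 ! j $$ (1,1) = of_real (cw j)" using X1e[OF j] col0 sesq_real[OF Wh[OF j]] unfolding cw_def by simp
    moreover have "X2 ! j $$ (1,1) = cnj (X1 ! j $$ (1,1))" using X2e[OF j] by simp
    ultimately show ?thesis by simp
  qed
  have e01: "X1 ! j $$ (0,1) + X2 ! j $$ (0,1) = 2 * of_real (bt j)" if j: "j < length A" for j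
  proof -
    have a: "X1 ! j $$ (0,1) = cnj (sesq m (W ! j) w u)" using X1e[OF j] col0 sesq_herm_cnj[OF Wh[OF j]] by simp
    have "X2 ! j $$ (0,1) = cnj (X1 ! j $$ (0,1))" using X2e[OF j] by simp
    then show ?thesis using a unfolding bt_def by (simp add: cnj_add_self)
  qed
  have e10: "X1 ! j $$ (1,0) + X2 ! j $$ (1,0) = 2 * of_real (bt j)" if j: "j < length A" for j
  proof -
    have a: "X1 ! j $$ (1,0) = sesq m (W ! j) w u" using X1e[OF j] col0 by simp
    have "X2 ! j $$ (1,0) = cnj (X1 ! j $$ (1,0))" using X2e[OF j] by simp
    then show ?thesis using a unfolding bt_def by (simp add: cnj_add_self)
  qed
  have l1: "length X1 = length A" "length X2 = length A" unfolding X2_def X1_def using lenW by auto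
  let ?L = "formF d (LA A aw)" and ?B = "formF d (BA A bt)" and ?C = "formF d (LA A cw)"
  have sL: "sesq_form d ?L" by (rule formF_sesq) (rule LA_herm[OF A])
  have sC: "sesq_form d ?C" by (rule formF_sesq) (rule LA_herm[OF A])
  have sB: "sesq_form d ?B" by (rule formF_sesq) (rule BA_herm[OF A])
  have H: "0 \<le> Re (?L al al) + Re (?C ga ga) - 2 * Re (?B al ga)" for al ga
  proof -
    let ?psi = "\<lambda>x k. if k = 0 then al x else ga x"
    have "0 \<le> Re (specQ d A 2 X1 ?psi)" using X1in spec_iff[OF A X1S] by blast
    moreover have "0 \<le> Re (specQ d A 2 X2 ?psi)" using X2in spec_iff[OF A X2S] by blast
    moreover have "Re (specQ d A 2 X1 ?psi) + Re (specQ d A 2 X2 ?psi) = 2 * (Re (?L al al) + Re (?C ga ga) - Re (?B al ga) - Re (?B ga al))"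
    proof -
      have "specQ d A 2 X1 ?psi + specQ d A 2 X2 ?psi = 2 * (?L al al + ?C ga ga - ?B al ga - ?B ga al)"
        by (rule spec2_sum[OF l1 e00 e11 e01 e10])
      then have "Re (specQ d A 2 X1 ?psi + specQ d A 2 X2 ?psi) = Re (2 * (?L al al + ?C ga ga - ?B al ga - ?B ga al))" by simp
      then show ?thesis by simp
    qed
    moreover have "Re (?B ga al) = Re (?B al ga)" using sf_herm[OF sB, of ga al] by simp
    ultimately show ?thesis by (smt (verit))
  qed
  obtain t where t0: "t > 0" and tH: "\<And>a. 0 \<le> Re (?L a a) - t * Re (?B a a) \<and> 0 \<le> Re (?L a a) + t * Re (?B a a)"
    using key_final[OF sL sB sC H] by blast
  define fp where "fp j = aw j + t * bt j" for j
  define fm where "fm j = aw j + (- t) * bt j" for j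
  have fpin: "pt fp (length A) \<in> spectrahedron d A 1"
    unfolding pt_in[OF A] fp_def[abs_def] LA_shift formF_diff using tH by simp
  have fmin: "pt fm (length A) \<in> spectrahedron d A 1"
    unfolding pt_in[OF A] fm_def[abs_def] LA_shift formF_diff using tH by simp
  have fpS: "pt fp g \<in> proj_graded g (spectrahedron d A) 1"
    unfolding proj_graded_def using fpin take_pt[OF gh] by (metis image_eqI)
  have fmS: "pt fm g \<in> proj_graded g (spectrahedron d A) 1"
    unfolding proj_graded_def using fmin take_pt[OF gh] by (metis image_eqI)
  have x2: "x = pt (\<lambda>j. (1/2) * fp j + (1 - 1/2) * fm j) g"
    unfolding xu pt_eq_iff fp_def fm_def aw_def by (simp add: algebra_simps)
  have "\<forall>j<g. fp j = fm j" by (rule extreme_pt[OF E fpS fmS _ _ x2]) auto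
  then have bt0: "bt j0 = 0" using j0 t0 unfolding fp_def fm_def by auto
  have "sesq m (W ! j0) w u = (\<Sum>k<m. cnj (w k) * (r k + of_real (aw j0) * u k))"
    unfolding sesq_row r_def by simp
  also have "\<dots> = (\<Sum>k<m. cnj (w k) * r k) + of_real (aw j0) * (\<Sum>k<m. cnj (w k) * u k)"
    by (simp add: algebra_simps sum.distrib sum_distrib_left)
  also have "(\<Sum>k<m. cnj (w k) * r k) = (\<Sum>k<m. cnj (r k) * r k) / of_real (sqrt rho)"
    unfolding w_def by (simp add: sum_divide_distrib)
  also have "(\<Sum>k<m. cnj (r k) * r k) = of_real rho" unfolding rho_def cnj_mult_self by simp
  finally have "bt j0 = rho / sqrt rho" unfolding bt_def o3 by simp
  then have "bt j0 > 0" using rho0 by simp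
  then show False using bt0 by simp
qed


lemma householder:
  assumes m: "0 < m" and u: "(\<Sum>k<m. cnj (u k) * u k) = 1"
  shows "\<exists>H mu. H \<in> carrier_mat m m \<and> mat_adjoint H = H \<and> H * H = 1\<^sub>m m \<and> cmod mu = 1 \<and>
     (\<forall>p<m. (\<Sum>k<m. H $$ (p,k) * u k) = (if p = 0 then mu else 0))"
proof -
  define mu where "mu = (if u 0 = 0 then 1 else u 0 / of_real (cmod (u 0)))"
  have mu1: "cmod mu = 1" unfolding mu_def by (simp add: norm_divide)
  have cmu: "cnj mu * u 0 = of_real (cmod (u 0))"
  proof (cases "u 0 = 0")
    case False
    have "cnj (u 0) * u 0 = of_real ((cmod (u 0))^2)" by (rule cnj_mult_self)
    then show ?thesis using False unfolding mu_def by (simp add: power2_eq_square field_simps)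
  qed (simp add: mu_def)
  have mmu: "mu * cnj mu = 1" using mu1 complex_norm_square[of mu] by simp
  define wv where "wv k = u k - (if k = 0 then mu else 0)" for k
  define sc where "sc = (\<Sum>k<m. cnj (wv k) * wv k)"
  define tau where "tau = (\<Sum>k<m. cnj (wv k) * u k)"
  have sc_real: "cnj sc = sc" unfolding sc_def by (simp add: cnj_sum mult.commute)
  have m0: "0 \<in> {..<m}" using m by simp
  have tau_eq: "tau = 1 - of_real (cmod (u 0))"
  proof -
    have "tau = (\<Sum>k<m. cnj (u k) * u k) - (\<Sum>k<m. (if k = 0 then cnj mu * u k else 0))"
    proof -
      have pw: "cnj (wv k) * u k = cnj (u k) * u k - (if k = 0 then cnj mu * u k else 0)" for k
        by (cases "k = 0") (simp_all add: wv_def algebra_simps)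
      show ?thesis unfolding tau_def pw sum_subtractf ..
    qed
    also have "(\<Sum>k<m. (if k = 0 then cnj mu * u k else 0)) = cnj mu * u 0" using m0 by (simp add: sum.delta)
    finally show ?thesis using u cmu by simp
  qed
  have sc_eq: "sc = 2 * tau"
  proof -
    have "sc = tau - (\<Sum>k<m. (if k = 0 then mu * cnj (wv k) else 0))"
    proof -
      have pw: "cnj (wv k) * wv k = cnj (wv k) * u k - (if k = 0 then mu * cnj (wv k) else 0)" for k
        by (cases "k = 0") (simp_all add: wv_def algebra_simps)
      show ?thesis unfolding sc_def tau_def pw sum_subtractf ..
    qed
    also have "(\<Sum>k<m. (if k = 0 then mu * cnj (wv k) else 0)) = mu * cnj (wv 0)" using m0 by (simp add: sum.delta)
    also have "mu * cnj (wv 0) = mu * cnj (u 0) - mu * cnj mu" unfolding wv_def by (simp add: algebra_simps)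
    also have "mu * cnj (u 0) = cnj (cnj mu * u 0)" by simp
    finally show ?thesis unfolding cmu mmu tau_eq by simp
  qed
  define H where "H = mat m m (\<lambda>(p,q). (if p = q then 1 else 0) - 2 * wv p * cnj (wv q) / sc)"
  have Hc: "H \<in> carrier_mat m m" unfolding H_def by simp
  have Hi: "H $$ (p,q) = (if p = q then 1 else 0) - 2 * wv p * cnj (wv q) / sc" if "p < m" "q < m" for p q
    unfolding H_def using that by simp
  have Hadj: "mat_adjoint H = H"
  proof (rule eq_matI)
    fix i j assume "i < dim_row H" "j < dim_col H"
    then have i: "i < m" and j: "j < m" using Hc by auto
    show "mat_adjoint H $$ (i,j) = H $$ (i,j)"
      using i j Hc Hi sc_real by (simp add: mult.commute)
  qed (use Hc in auto)
  have HH: "H * H = 1\<^sub>m m"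
  proof (rule eq_matI)
    fix p q assume "p < dim_row (1\<^sub>m m :: complex mat)" "q < dim_col (1\<^sub>m m :: complex mat)"
    then have p: "p < m" and q: "q < m" by auto
    have "(H * H) $$ (p,q) = (\<Sum>k<m. H $$ (p,k) * H $$ (k,q))"
      using p q Hc by (simp add: scalar_prod_def lessThan_atLeast0)
    also have "\<dots> = (\<Sum>k<m. (if p = k then 1 else 0) * (if k = q then 1 else 0)) -
        (\<Sum>k<m. (if p = k then 1 else 0) * (2 * wv k * cnj (wv q) / sc)) -
        (\<Sum>k<m. (2 * wv p * cnj (wv k) / sc) * (if k = q then 1 else 0)) +
        (\<Sum>k<m. (2 * wv p * cnj (wv k) / sc) * (2 * wv k * cnj (wv q) / sc))"
    proof -
      have "(\<Sum>k<m. H $$ (p,k) * H $$ (k,q)) = (\<Sum>k<m. (if p = k then 1 else 0) * (if k = q then 1 else 0) -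
        (if p = k then 1 else 0) * (2 * wv k * cnj (wv q) / sc) -
        (2 * wv p * cnj (wv k) / sc) * (if k = q then 1 else 0) +
        (2 * wv p * cnj (wv k) / sc) * (2 * wv k * cnj (wv q) / sc))"
        by (rule sum.cong[OF refl]) (simp add: Hi p q algebra_simps)
      then show ?thesis by (simp only: sum.distrib sum_subtractf)
    qed
    also have "(\<Sum>k<m. (if p = k then 1 else 0) * (if k = q then 1 else (0::complex))) = (if p = q then 1 else 0)"
    proof -
      have "(\<Sum>k<m. (if p = k then 1 else 0) * (if k = q then 1 else (0::complex))) = (\<Sum>k<m. if p = k then (if k = q then 1 else 0) else (0::complex))"
        by (rule sum.cong) auto
      also have "\<dots> = (if p = q then 1 else 0)" using p by simp
      finally show ?thesis .
    qed
    also have "(\<Sum>k<m. (if p = k then 1 else 0) * (2 * wv k * cnj (wv q) / sc)) = 2 * wv p * cnj (wv q) / sc"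
    proof -
      have "(\<Sum>k<m. (if p = k then 1 else 0) * (2 * wv k * cnj (wv q) / sc)) = (\<Sum>k<m. if p = k then 2 * wv k * cnj (wv q) / sc else 0)"
        by (rule sum.cong) auto
      also have "\<dots> = 2 * wv p * cnj (wv q) / sc" using p by simp
      finally show ?thesis .
    qed
    also have "(\<Sum>k<m. (2 * wv p * cnj (wv k) / sc) * (if k = q then 1 else 0)) = 2 * wv p * cnj (wv q) / sc"
    proof -
      have "(\<Sum>k<m. (2 * wv p * cnj (wv k) / sc) * (if k = q then 1 else 0)) = (\<Sum>k<m. if k = q then 2 * wv p * cnj (wv k) / sc else 0)"
        by (rule sum.cong) auto
      also have "\<dots> = 2 * wv p * cnj (wv q) / sc" using q by simp
      finally show ?thesis .
    qed
    also have "(\<Sum>k<m. (2 * wv p * cnj (wv k) / sc) * (2 * wv k * cnj (wv q) / sc)) = 4 * wv p * cnj (wv q) * sc / (sc * sc)"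
      unfolding sc_def by (simp add: sum_distrib_left sum_divide_distrib algebra_simps)
    also have "4 * wv p * cnj (wv q) * sc / (sc * sc) = 4 * wv p * cnj (wv q) / sc"
      by (cases "sc = 0") (simp_all add: field_simps)
    finally show "(H * H) $$ (p,q) = (1\<^sub>m m :: complex mat) $$ (p,q)" using p q by simp
  qed (use Hc in auto)
  have Hu: "(\<Sum>k<m. H $$ (p,k) * u k) = (if p = 0 then mu else 0)" if p: "p < m" for p
  proof -
    have "(\<Sum>k<m. H $$ (p,k) * u k) = (\<Sum>k<m. (if p = k then u k else 0)) - 2 * wv p * tau / sc"
    proof -
      have "(\<Sum>k<m. H $$ (p,k) * u k) = (\<Sum>k<m. (if p = k then u k else 0) - 2 * wv p / sc * (cnj (wv k) * u k))"
        by (rule sum.cong[OF refl]) (simp add: Hi p algebra_simps)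
      also have "\<dots> = (\<Sum>k<m. (if p = k then u k else 0)) - 2 * wv p / sc * tau"
        unfolding tau_def by (simp only: sum_subtractf sum_distrib_left)
      finally show ?thesis by simp
    qed
    also have "(\<Sum>k<m. (if p = k then u k else 0)) = u p" using p by simp
    also have "u p - 2 * wv p * tau / sc = u p - wv p"
    proof (cases "sc = 0")
      case False
      then show ?thesis unfolding sc_eq by (simp add: field_simps)
    next
      case True
      have "(\<Sum>k<m. (cmod (wv k))^2) = 0" using True unfolding sc_def cnj_mult_self
        by (metis of_real_eq_0_iff of_real_sum)
      then have "\<forall>k\<in>{..<m}. (cmod (wv k))^2 = 0" by (subst (asm) sum_nonneg_eq_0_iff) auto
      then have "wv p = 0" using p by simp
      then show ?thesis by simp
    qed
    also have "u p - wv p = (if p = 0 then mu else 0)" unfolding wv_def by simp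
    finally show ?thesis .
  qed
  show ?thesis using Hc Hadj HH mu1 Hu by blast
qed


lemma one_adj: "mat_adjoint (1\<^sub>m n) = (1\<^sub>m n :: complex mat)"
  by (rule eq_matI) auto

lemma reducing_unitary:
  assumes A: "\<forall>i<length A. hermitian_mat d (A ! i)" and gh: "g \<le> length A"
    and W: "W \<in> spectrahedron d A m" and m: "1 \<le> m" and u: "(\<Sum>k<m. cnj (u k) * u k) = 1"
    and xu: "x = pt (\<lambda>j. Re (sesq m (W ! j) u u)) g"
    and eig: "\<forall>j<g. \<forall>k<m. (\<Sum>l<m. W ! j $$ (k,l) * u l) = of_real (Re (sesq m (W ! j) u u)) * u k"
  shows "unitarily_equiv m (take g W) x \<or>
    (\<exists>p Z. Z \<in> proj_graded g (\<lambda>n. if 1 \<le> n then spectrahedron d A n else {}) p \<and> m = 1 + p \<and>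
       unitarily_equiv m (take g W) (tuple_dsum 1 p x Z))"
proof -
  define aw where "aw j = Re (sesq m (W ! j) u u)" for j
  have WS: "W \<in> SM_tuples (length A) m" using W unfolding spectrahedron_def by auto
  have lenW: "length W = length A" using WS unfolding SM_tuples_def by simp
  have Wh: "hermitian_mat m (W ! j)" if "j < length A" for j using WS that unfolding SM_tuples_def by simp
  have Wc: "W ! j \<in> carrier_mat m m" if "j < length A" for j using herm_carrier[OF Wh[OF that]] .
  have eig': "(\<Sum>l<m. W ! j $$ (k,l) * u l) = of_real (aw j) * u k" if "j < g" "k < m" for j k
    using eig that unfolding aw_def by blast
  show ?thesis
  proof (cases "m = 1")
    case True
    have u0: "u 0 \<noteq> 0" using u True by auto
    have "take g W = tuple_compress (1\<^sub>m 1) x"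
    proof (rule nth_equalityI)
      show "length (take g W) = length (tuple_compress (1\<^sub>m 1) x)"
        using lenW gh unfolding xu tuple_compress_def by simp
      fix j assume "j < length (take g W)"
      then have j: "j < g" and jA: "j < length A" using lenW gh by auto
      have c: "W ! j \<in> carrier_mat 1 1" using Wc[OF jA] True by simp
      have "W ! j $$ (0,0) * u 0 = of_real (aw j) * u 0" using eig'[OF j] True by simp
      then have e: "W ! j $$ (0,0) = of_real (aw j)" using u0 by simp
      have "W ! j = mat 1 1 (\<lambda>_. of_real (aw j))" using c e by (auto intro!: eq_matI)
      moreover have "x ! j = mat 1 1 (\<lambda>_. of_real (aw j))" unfolding xu aw_def using j by simp
      moreover have "tuple_compress (1\<^sub>m 1) x ! j = 1\<^sub>m 1 * (x ! j) * 1\<^sub>m 1"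
        unfolding tuple_compress_def one_adj using j xu by simp
      ultimately show "take g W ! j = tuple_compress (1\<^sub>m 1) x ! j" using j by simp
    qed
    moreover have "unitary_mat 1 (1\<^sub>m 1)" unfolding unitary_mat_def one_adj by simp
    ultimately show ?thesis unfolding unitarily_equiv_def using True by blast
  next
    case False
    then have m2: "m \<ge> 2" using m by simp
    define p where "p = m - 1"
    have p1: "1 \<le> p" and mp: "m = 1 + p" unfolding p_def using m2 by auto
    obtain H mu where Hc: "H \<in> carrier_mat m m" and Hadj: "mat_adjoint H = H" and HH: "H * H = 1\<^sub>m m"
      and mu1: "cmod mu = 1" and Hu: "\<And>q. q < m \<Longrightarrow> (\<Sum>k<m. H $$ (q,k) * u k) = (if q = 0 then mu else 0)"
      using householder[of m u] m u by auto
    have mu0: "mu \<noteq> 0" using mu1 by auto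
    have Hherm: "hermitian_mat m H" unfolding hermitian_mat_def using Hc Hadj by simp
    have Hcnj: "cnj (H $$ (k,a)) = H $$ (a,k)" if "k < m" "a < m" for k a
      using herm_entry[OF Hherm that(2) that(1)] .
    have HHe: "(\<Sum>q<m. H $$ (a,q) * H $$ (q,b)) = (if a = b then 1 else 0)" if "a < m" "b < m" for a b
    proof -
      have "(H * H) $$ (a,b) = (\<Sum>q<m. H $$ (a,q) * H $$ (q,b))" using that Hc by (simp add: scalar_prod_def lessThan_atLeast0)
      then show ?thesis using HH that by simp
    qed
    have H0: "H $$ (l,0) = u l / mu" if l: "l < m" for l
    proof -
      have "u l = (\<Sum>k<m. if l = k then u k else 0)" using l by simp
      also have "\<dots> = (\<Sum>k<m. (\<Sum>q<m. H $$ (l,q) * H $$ (q,k)) * u k)"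
        using l HHe by (intro sum.cong refl) simp
      also have "\<dots> = (\<Sum>q<m. H $$ (l,q) * (\<Sum>k<m. H $$ (q,k) * u k))"
      proof -
        have "(\<Sum>k<m. (\<Sum>q<m. H $$ (l,q) * H $$ (q,k)) * u k) = (\<Sum>k<m. \<Sum>q<m. H $$ (l,q) * (H $$ (q,k) * u k))"
          by (simp add: sum_distrib_right mult.assoc)
        also have "\<dots> = (\<Sum>q<m. \<Sum>k<m. H $$ (l,q) * (H $$ (q,k) * u k))" by (rule sum.swap)
        also have "\<dots> = (\<Sum>q<m. H $$ (l,q) * (\<Sum>k<m. H $$ (q,k) * u k))" by (simp add: sum_distrib_left)
        finally show ?thesis .
      qed
      also have "\<dots> = (\<Sum>q<m. H $$ (l,q) * (if q = 0 then mu else 0))" using Hu by simp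
      also have "\<dots> = (\<Sum>q<m. if q = 0 then H $$ (l,q) * mu else 0)" by (rule sum.cong) auto
      also have "\<dots> = H $$ (l,0) * mu" using m by simp
      finally show ?thesis using mu0 by (simp add: field_simps)
    qed
    define U2 where "U2 = mat m p (\<lambda>(k,c). H $$ (k, c+1))"
    have U2c: "U2 \<in> carrier_mat m p" unfolding U2_def by simp
    have iso: "mat_adjoint U2 * U2 = 1\<^sub>m p"
    proof (rule eq_matI)
      fix a b assume "a < dim_row (1\<^sub>m p :: complex mat)" "b < dim_col (1\<^sub>m p :: complex mat)"
      then have a: "a < p" and b: "b < p" by auto
      have "(mat_adjoint U2 * U2) $$ (a,b) = (\<Sum>k<m. cnj (U2 $$ (k,a)) * U2 $$ (k,b))"
        using a b U2c by (simp add: scalar_prod_def lessThan_atLeast0)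
      also have "\<dots> = (\<Sum>k<m. H $$ (a+1,k) * H $$ (k,b+1))"
        using a b Hcnj unfolding U2_def p_def by (intro sum.cong refl) auto
      also have "\<dots> = (if a = b then 1 else 0)" using HHe[of "a+1" "b+1"] a b unfolding p_def by simp
      finally show "(mat_adjoint U2 * U2) $$ (a,b) = (1\<^sub>m p :: complex mat) $$ (a,b)" using a b by simp
    qed (use U2c in auto)
    define Z where "Z = take g (map (\<lambda>M. mat_adjoint U2 * M * U2) W)"
    have Zin: "Z \<in> proj_graded g (\<lambda>n. if 1 \<le> n then spectrahedron d A n else {}) p"
      unfolding proj_graded_def Z_def using compress_spec[OF A W U2c iso] p1 by auto
    have key: "mat_adjoint H * four_block_mat (x ! j) (0\<^sub>m 1 p) (0\<^sub>m p 1) (Z ! j) * H = W ! j" if j: "j < g" for j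
    proof -
      have jA: "j < length A" using j gh by simp
      define D where "D = mat_adjoint H * W ! j * H"
      have Dc: "D \<in> carrier_mat m m" unfolding D_def using Hc Wc[OF jA] by auto
      have Dh: "hermitian_mat m D" unfolding D_def by (rule compress_herm[OF Wh[OF jA] Hc])
      have De: "D $$ (a,b) = sesq m (W ! j) (\<lambda>k. H $$ (k,a)) (\<lambda>k. H $$ (k,b))" if "a < m" "b < m" for a b
        unfolding D_def using compress_index[OF Wc[OF jA] Hc that] .
      have D0: "D $$ (a,0) = (if a = 0 then of_real (aw j) else 0)" if a: "a < m" for a
      proof -
        have m0: "0 < m" using m by simp
        have "D $$ (a,0) = sesq m (W ! j) (\<lambda>k. H $$ (k,a)) (\<lambda>k. H $$ (k,0))" by (rule De[OF a m0])
        also have "\<dots> = sesq m (W ! j) (\<lambda>k. H $$ (k,a)) (\<lambda>k. u k / mu)" by (rule sesq_cong) (simp_all add: H0)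
        also have "\<dots> = (\<Sum>k<m. cnj (H $$ (k,a)) * (\<Sum>l<m. W ! j $$ (k,l) * u l)) / mu"
        proof -
          have "sesq m (W ! j) (\<lambda>k. H $$ (k,a)) (\<lambda>k. u k / mu) = (\<Sum>k<m. cnj (H $$ (k,a)) * (\<Sum>l<m. W ! j $$ (k,l) * u l) / mu)"
            unfolding sesq_row by (intro sum.cong refl) (simp add: sum_divide_distrib[symmetric])
          then show ?thesis by (simp add: sum_divide_distrib)
        qed
        also have "(\<Sum>k<m. cnj (H $$ (k,a)) * (\<Sum>l<m. W ! j $$ (k,l) * u l)) = (\<Sum>k<m. H $$ (a,k) * u k * of_real (aw j))"
          by (rule sum.cong[OF refl]) (simp add: eig'[OF j] Hcnj a)
        also have "\<dots> = (\<Sum>k<m. H $$ (a,k) * u k) * of_real (aw j)" by (simp add: sum_distrib_right)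
        also have "(\<Sum>k<m. H $$ (a,k) * u k) * of_real (aw j) / mu = (if a = 0 then of_real (aw j) else 0)" using Hu[OF a] mu0 by simp
        finally show ?thesis .
      qed
      have D0': "D $$ (0,b) = (if b = 0 then of_real (aw j) else 0)" if b: "b < m" for b
      proof -
        have "D $$ (0,b) = cnj (D $$ (b,0))" using herm_entry[OF Dh _ b] m by simp
        then show ?thesis using D0[OF b] by simp
      qed
      have xj: "x ! j = mat 1 1 (\<lambda>_. of_real (aw j))" unfolding xu aw_def using j by simp
      have Zj: "Z ! j = mat_adjoint U2 * W ! j * U2" unfolding Z_def using j jA lenW by simp
      have Zjc: "Z ! j \<in> carrier_mat p p" unfolding Zj using U2c Wc[OF jA] by auto
      have Ze: "Z ! j $$ (a,b) = D $$ (a+1,b+1)" if "a < p" "b < p" for a b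
      proof -
        have "Z ! j $$ (a,b) = sesq m (W ! j) (\<lambda>k. U2 $$ (k,a)) (\<lambda>k. U2 $$ (k,b))"
          unfolding Zj using compress_index[OF Wc[OF jA] U2c that] .
        also have "\<dots> = sesq m (W ! j) (\<lambda>k. H $$ (k,a+1)) (\<lambda>k. H $$ (k,b+1))"
          using that by (intro sesq_cong) (auto simp: U2_def)
        also have "\<dots> = D $$ (a+1,b+1)" using De that unfolding p_def by simp
        finally show ?thesis .
      qed
      have F: "four_block_mat (x ! j) (0\<^sub>m 1 p) (0\<^sub>m p 1) (Z ! j) = D"
      proof (rule eq_matI)
        show "dim_row (four_block_mat (x ! j) (0\<^sub>m 1 p) (0\<^sub>m p 1) (Z ! j)) = dim_row D"
          using Dc Zjc mp unfolding xj by simp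
        show "dim_col (four_block_mat (x ! j) (0\<^sub>m 1 p) (0\<^sub>m p 1) (Z ! j)) = dim_col D"
          using Dc Zjc mp unfolding xj by simp
        fix a b assume "a < dim_row D" "b < dim_col D"
        then have a: "a < m" and b: "b < m" using Dc by auto
        show "four_block_mat (x ! j) (0\<^sub>m 1 p) (0\<^sub>m p 1) (Z ! j) $$ (a,b) = D $$ (a,b)"
        proof -
          have idx: "four_block_mat (x ! j) (0\<^sub>m 1 p) (0\<^sub>m p 1) (Z ! j) $$ (a,b) =
            (if a < 1 then if b < 1 then x ! j $$ (a,b) else 0\<^sub>m 1 p $$ (a,b - 1)
             else if b < 1 then 0\<^sub>m p 1 $$ (a - 1, b) else Z ! j $$ (a - 1, b - 1))"
            using a b Zjc mp unfolding xj by (subst index_mat_four_block) auto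
          show ?thesis
          proof (cases "a = 0")
            case True
            then show ?thesis unfolding idx using D0' b mp by (auto simp: xj)
          next
            case False
            note a0 = False
            show ?thesis
            proof (cases "b = 0")
              case True
              then show ?thesis unfolding idx using D0 a a0 mp by auto
            next
              case False
              then show ?thesis unfolding idx using Ze[of "a-1" "b-1"] a b a0 mp by auto
            qed
          qed
        qed
      qed
      have "mat_adjoint H * D * H = H * (H * W ! j * H) * H" unfolding D_def Hadj ..
      also have "\<dots> = W ! j"
      proof -
        have Wjc: "W ! j \<in> carrier_mat m m" by (rule Wc[OF jA])
        have "H * (H * W ! j * H) = H * (H * (W ! j * H))" using Hc Wjc by simp
        also have "\<dots> = (H * H) * (W ! j * H)" by (rule sym) (rule assoc_mult_mat[OF Hc Hc mult_carrier_mat[OF Wjc Hc]])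
        also have "\<dots> = W ! j * H" using HH Wjc Hc by simp
        finally have "H * (H * W ! j * H) * H = W ! j * H * H" by simp
        also have "\<dots> = W ! j * (H * H)" using Hc Wjc by simp
        also have "\<dots> = W ! j" using HH Wjc by simp
        finally show ?thesis .
      qed
      finally show ?thesis unfolding F .
    qed
    have "take g W = tuple_compress H (tuple_dsum 1 p x Z)"
    proof (rule nth_equalityI)
      show "length (take g W) = length (tuple_compress H (tuple_dsum 1 p x Z))"
        unfolding tuple_compress_def tuple_dsum_def Z_def xu using lenW gh by simp
      fix j assume "j < length (take g W)"
      then have j: "j < g" using lenW gh by simp
      have lx: "length x = g" unfolding xu by simp
      have lZ: "length Z = g" unfolding Z_def using lenW gh by simp
      show "take g W ! j = tuple_compress H (tuple_dsum 1 p x Z) ! j"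
        unfolding tuple_compress_def tuple_dsum_def using j lx lZ key[OF j] by simp
    qed
    moreover have "unitary_mat m H" unfolding unitary_mat_def using Hc Hadj HH by simp
    ultimately show ?thesis unfolding unitarily_equiv_def using Zin mp by blast
  qed
qed


lemma sesq_smul: "sesq m M (\<lambda>l. c * a l) (\<lambda>l. c * a l) = cnj c * c * sesq m M a a"
  unfolding sesq_def by (simp add: sum_distrib_left mult_ac)

lemma mat_sum_index: "i < r \<Longrightarrow> j < c \<Longrightarrow> mat_sum r c k f $$ (i,j) = (\<Sum>l<k. f l $$ (i,j))"
  unfolding mat_sum_def by simp

theorem mainTheorem11:
  fixes g h d :: nat and A :: "complex mat list" and x :: "complex mat list"
  assumes "g \<le> h"
    and "length A = h"
    and "\<forall>i<h. hermitian_mat d (A ! i)"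
    and "bounded_graded (\<lambda>n. if 1 \<le> n then spectrahedron d A n else {})"
    and "\<forall>X \<in> spectrahedron d A 2. map (map_mat cnj) X \<in> spectrahedron d A 2"
    and "euclidean_extreme_point x (proj_graded g (spectrahedron d A) 1)"
  shows "free_extreme_point (proj_graded g (\<lambda>n. if 1 \<le> n then spectrahedron d A n else {})) 1 x"
proof -
  note E = assms(6) and conjH = assms(5)
  have A: "\<forall>i<length A. hermitian_mat d (A ! i)" using assms(2,3) by simp
  have gh: "g \<le> length A" using assms(1,2) by simp
  let ?K = "proj_graded g (\<lambda>n. if 1 \<le> n then spectrahedron d A n else {})"
  let ?S = "proj_graded g (spectrahedron d A) 1"
  have xS: "x \<in> ?S" using E unfolding euclidean_extreme_point_def by simp
  have K1: "?K 1 = ?S" unfolding proj_graded_def by simp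
  obtain X1 where X1: "X1 \<in> spectrahedron d A 1" and xX: "x = take g X1" using xS unfolding proj_graded_def by auto
  have X1S: "X1 \<in> SM_tuples (length A) 1" using X1 unfolding spectrahedron_def by auto
  define xf where "xf j = Re (X1 ! j $$ (0,0))" for j
  have xpt: "x = pt xf g" unfolding xX xf_def using SM1_pt[OF X1S] take_pt[OF gh] by metis
  show ?thesis unfolding free_extreme_point_def
  proof (intro conjI allI impI)
    show "x \<in> ?K 1" using xS K1 by simp
    fix k :: nat and mm :: "nat \<Rightarrow> nat" and V :: "nat \<Rightarrow> complex mat" and Y :: "nat \<Rightarrow> complex mat list"
    assume H: "(\<forall>i<k. V i \<in> carrier_mat (mm i) 1 \<and> V i \<noteq> 0\<^sub>m (mm i) 1 \<and> Y i \<in> ?K (mm i)) \<and>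
        mat_sum 1 1 k (\<lambda>i. mat_adjoint (V i) * V i) = 1\<^sub>m 1 \<and>
        (\<forall>j<length x. x ! j = mat_sum 1 1 k (\<lambda>i. mat_adjoint (V i) * (Y i ! j) * V i))"
    have Vc: "\<And>i. i < k \<Longrightarrow> V i \<in> carrier_mat (mm i) 1" using H by blast
    have V0: "\<And>i. i < k \<Longrightarrow> V i \<noteq> 0\<^sub>m (mm i) 1" using H by blast
    have "\<forall>i\<in>{..<k}. \<exists>Wi. 1 \<le> mm i \<and> Wi \<in> spectrahedron d A (mm i) \<and> Y i = take g Wi"
      using H unfolding proj_graded_def by (auto split: if_splits)
    then obtain W where W1: "\<And>i. i < k \<Longrightarrow> 1 \<le> mm i" and WD: "\<And>i. i < k \<Longrightarrow> W i \<in> spectrahedron d A (mm i)"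
      and YW: "\<And>i. i < k \<Longrightarrow> Y i = take g (W i)"
      by (metis lessThan_iff bchoice)
    have lenW: "length (W i) = length A" if "i < k" for i
      using WD[OF that] unfolding spectrahedron_def SM_tuples_def by auto
    have Wh: "hermitian_mat (mm i) (W i ! j)" if "i < k" "j < length A" for i j
      using WD[OF that(1)] that(2) unfolding spectrahedron_def SM_tuples_def by auto
    define v where "v i = (\<lambda>l. V i $$ (l,0))" for i
    define t where "t i = (\<Sum>l<mm i. (cmod (v i l))^2)" for i
    have tv: "(\<Sum>l<mm i. cnj (v i l) * v i l) = of_real (t i)" for i
      unfolding t_def cnj_mult_self by simp
    have tpos: "t i > 0" if i: "i < k" for i
    proof -
      have "\<exists>l<mm i. V i $$ (l,0) \<noteq> 0"
      proof (rule ccontr)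
        assume "\<not> ?thesis"
        then have "V i = 0\<^sub>m (mm i) 1" using Vc[OF i] by (auto intro!: eq_matI)
        then show False using V0[OF i] by simp
      qed
      then obtain l where l: "l < mm i" "v i l \<noteq> 0" unfolding v_def by blast
      have "0 < (cmod (v i l))^2" using l by simp
      also have "\<dots> \<le> t i" unfolding t_def using l by (intro member_le_sum) auto
      finally show ?thesis .
    qed
    have VV: "(mat_adjoint (V i) * V i) $$ (0,0) = of_real (t i)" if i: "i < k" for i
      using Vc[OF i] tv[of i] unfolding v_def by (simp add: scalar_prod_def lessThan_atLeast0)
    have tsum: "(\<Sum>i<k. t i) = 1"
    proof -
      have "(\<Sum>i<k. (mat_adjoint (V i) * V i) $$ (0,0)) = 1"
        using H mat_sum_index[of 0 1 0 1 k "\<lambda>i. mat_adjoint (V i) * V i"] by simp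
      then have "(\<Sum>i<k. complex_of_real (t i)) = 1" using VV by simp
      then show ?thesis by (metis of_real_eq_1_iff of_real_sum)
    qed
    define un where "un i = (\<lambda>l. (1 / of_real (sqrt (t i))) * v i l)" for i
    have unit: "(\<Sum>l<mm i. cnj (un i l) * un i l) = 1" if i: "i < k" for i
    proof -
      have "(\<Sum>l<mm i. cnj (un i l) * un i l) = (\<Sum>l<mm i. cnj (v i l) * v i l) / of_real (t i)"
        unfolding un_def using tpos[OF i]
        by (simp add: sum_divide_distrib mult_ac flip: of_real_mult)
      then show ?thesis using tv[of i] tpos[OF i] by simp
    qed
    define p where "p i j = Re (sesq (mm i) (W i ! j) (un i) (un i))" for i j
    have pin: "pt (p i) (length A) \<in> spectrahedron d A 1" if i: "i < k" for i
      unfolding p_def by (rule level1_compress[OF A WD[OF i] unit[OF i]])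
    have tp: "sesq (mm i) (W i ! j) (v i) (v i) = of_real (t i * p i j)" if i: "i < k" and j: "j < length A" for i j
    proof -
      have "sesq (mm i) (W i ! j) (un i) (un i) = of_real (1 / t i) * sesq (mm i) (W i ! j) (v i) (v i)"
        unfolding un_def sesq_smul using tpos[OF i] by (simp flip: of_real_mult)
      then have "p i j = Re (sesq (mm i) (W i ! j) (v i) (v i)) / t i" unfolding p_def by simp
      then show ?thesis using sesq_real[OF Wh[OF i j]] tpos[OF i] by (metis nonzero_mult_div_cancel_left
        less_numeral_extra(3) times_divide_eq_right)
    qed
    have xsum: "xf j = (\<Sum>i<k. t i * p i j)" if j: "j < g" for j
    proof -
      have jA: "j < length A" using j gh by simp
      have lx: "length x = g" unfolding xpt by simp
      have "x ! j $$ (0,0) = (\<Sum>i<k. (mat_adjoint (V i) * (Y i ! j) * V i) $$ (0,0))"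
        using H j lx mat_sum_index[of 0 1 0 1 k] by simp
      also have "\<dots> = (\<Sum>i<k. sesq (mm i) (W i ! j) (v i) (v i))"
      proof (rule sum.cong[OF refl])
        fix i assume "i \<in> {..<k}"
        then have i: "i < k" by simp
        have "Y i ! j = W i ! j" using YW[OF i] j lenW[OF i] gh by simp
        then show "(mat_adjoint (V i) * (Y i ! j) * V i) $$ (0,0) = sesq (mm i) (W i ! j) (v i) (v i)"
          using compress_index[OF herm_carrier[OF Wh[OF i jA]] Vc[OF i], of 0 0] unfolding v_def by simp
      qed
      also have "\<dots> = of_real (\<Sum>i<k. t i * p i j)" using tp jA by (simp add: of_real_sum)
      finally have e: "x ! j $$ (0,0) = of_real (\<Sum>i<k. t i * p i j)" .
      moreover have "x ! j $$ (0,0) = of_real (xf j)" using j unfolding xpt by simp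
      ultimately show ?thesis by (metis of_real_eq_iff)
    qed
    {
      fix i0 assume i0: "i0 < k"
      define I' where "I' = {..<k} - {i0}"
      have fI: "finite I'" unfolding I'_def by simp
      have split: "(\<Sum>i<k. f i) = f i0 + (\<Sum>i\<in>I'. f i)" for f :: "nat \<Rightarrow> real"
        unfolding I'_def using i0 by (simp add: sum.remove)
      have tI: "(\<Sum>i\<in>I'. t i) = 1 - t i0" using split[of t] tsum by simp
      have pe: "\<forall>j<g. p i0 j = xf j"
      proof (cases "I' = {}")
        case True
        then have "t i0 = 1" using tI by simp
        then show ?thesis using xsum split True by simp
      next
        case False
        then obtain i1 where i1: "i1 \<in> I'" by blast
        have "t i1 \<le> (\<Sum>i\<in>I'. t i)" using fI i1 tpos unfolding I'_def by (intro member_le_sum) (auto intro: less_imp_le)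
        then have t1: "t i0 < 1" using tI tpos i1 unfolding I'_def by force
        define q where "q j = (\<Sum>i\<in>I'. (t i / (1 - t i0)) * p i j)" for j
        have qin: "pt q (length A) \<in> spectrahedron d A 1"
          unfolding q_def[abs_def]
        proof (rule convex1[OF A fI])
          show "\<And>i. i \<in> I' \<Longrightarrow> 0 \<le> t i / (1 - t i0)" using tpos t1 unfolding I'_def by (auto intro: less_imp_le)
          show "(\<Sum>i\<in>I'. t i / (1 - t i0)) = 1" using tI t1 by (simp add: sum_divide_distrib[symmetric])
          show "\<And>i. i \<in> I' \<Longrightarrow> pt (p i) (length A) \<in> spectrahedron d A 1" using pin unfolding I'_def by auto
        qed
        have pS: "pt (p i0) g \<in> ?S" unfolding proj_graded_def using pin[OF i0] take_pt[OF gh] by (metis image_eqI)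
        have qS: "pt q g \<in> ?S" unfolding proj_graded_def using qin take_pt[OF gh] by (metis image_eqI)
        have xc: "x = pt (\<lambda>j. t i0 * p i0 j + (1 - t i0) * q j) g"
          unfolding xpt pt_eq_iff
        proof (intro allI impI)
          fix j assume j: "j < g"
          have "(1 - t i0) * q j = (\<Sum>i\<in>I'. t i * p i j)"
            unfolding q_def using t1 by (simp add: sum_distrib_left)
          then show "xf j = t i0 * p i0 j + (1 - t i0) * q j" using xsum[OF j] split by simp
        qed
        have "\<forall>j<g. p i0 j = q j" by (rule extreme_pt[OF E pS qS _ _ xc]) (use tpos[OF i0] t1 in auto)
        then show ?thesis using xc unfolding xpt pt_eq_iff by (auto simp: algebra_simps)
      qed
      have xu: "x = pt (\<lambda>j. Re (sesq (mm i0) (W i0 ! j) (un i0) (un i0))) g"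
        unfolding xpt pt_eq_iff using pe unfolding p_def by simp
      have eig: "\<forall>j<g. \<forall>l<mm i0. (\<Sum>l'<mm i0. W i0 ! j $$ (l,l') * un i0 l') =
          of_real (Re (sesq (mm i0) (W i0 ! j) (un i0) (un i0))) * un i0 l"
        by (rule reduce[OF A gh conjH E WD[OF i0] unit[OF i0] xu])
      show "unitarily_equiv (mm i0) (Y i0) x \<or>
        (\<exists>pa Z. Z \<in> ?K pa \<and> mm i0 = 1 + pa \<and> unitarily_equiv (mm i0) (Y i0) (tuple_dsum 1 pa x Z))"
        using reducing_unitary[OF A gh WD[OF i0] W1[OF i0] unit[OF i0] xu eig] YW[OF i0] by simp
    }
  qed
qed


end
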